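(* Let $d\ge1$. For every finite family $\mathcal{F}\subseteq\binom{\mathbb{N}}{d}$ one has $|\mathrm{Inc}(\mathcal{F})|\ge\mathrm{Inc}^{[d]}(|\mathcal{F}|)$.
   Context: $\mathbb{N}=\{1,2,3,\dots\}$; $\binom{\mathbb{N}}{d}$ is the set of $d$-element subsets of $\mathbb{N}$, elements written $\mathbf{u}=(u_1,\ldots,u_d)$ with $u_1<\cdots<u_d$. $\mathrm{Inc}_1$ is the set of maps $\pi\colon\mathbb{N}\to\mathbb{N}$ with $\pi(j)<\pi(j+1)$ and $\pi(j)\le j+1$ for all $j$, acting by $\pi(\mathbf{u})=(\pi(u_1),\ldots,\pi(u_d))$; $\mathrm{Inc}(\mathcal{F})=\{\pi(\mathbf{u})\mid\mathbf{u}\in\mathcal{F},\pi\in\mathrm{Inc}_1\}$. Every positive integer $m$ has a unique $d$-binomial representation $m=\binom{a_d}{d}+\binom{a_{d-1}}{d-1}+\cdots+\binom{a_s}{s}$ with $a_d>a_{d-1}>\cdots>a_s\ge s\ge1$; with this representation, $\mathrm{Inc}^{[d]}(m)=\binom{a_d+1}{d}+\binom{a_{d-1}+1}{d-1}+\cdots+\binom{a_s+1}{s}$, and $\mathrm{Inc}^{[d]}(0)=0$. *)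

theory Defs
  imports Main
begin

text \<open>Positive integers N = {1,2,3,...} are modelled as naturals >= 1.
  d-element subsets of N: finite sets of naturals >= 1 with card d.\<close>

definition dsubsets :: "nat \<Rightarrow> nat set set" where
  "dsubsets d = {u. finite u \<and> card u = d \<and> (\<forall>x\<in>u. 1 \<le> x)}"

text \<open>Inc_1: maps pi : N -> N with pi(j) < pi(j+1) and pi(j) <= j+1 for all j in N
  (the value at 0 is irrelevant).\<close>

definition Inc1 :: "(nat \<Rightarrow> nat) set" where
  "Inc1 = {pi. \<forall>j\<ge>1. 1 \<le> pi j \<and> pi j < pi (Suc j) \<and> pi j \<le> j + 1}"

definition IncF :: "nat set set \<Rightarrow> nat set set" where
  "IncF F = {pi ` u | u pi. u \<in> F \<and> pi \<in> Inc1}"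

definition dbinrep :: "nat \<Rightarrow> nat \<Rightarrow> nat \<Rightarrow> (nat \<Rightarrow> nat) \<Rightarrow> bool" where
  "dbinrep d m s a \<longleftrightarrow> 1 \<le> s \<and> s \<le> d \<and> s \<le> a s \<and>
     (\<forall>i. s \<le> i \<and> i < d \<longrightarrow> a i < a (Suc i)) \<and>
     m = (\<Sum>i=s..d. a i choose i)"

definition IncD :: "nat \<Rightarrow> nat \<Rightarrow> nat" where
  "IncD d m = (if m = 0 then 0 else
     (let (s, a) = (SOME (s, a). dbinrep d m s a) in (\<Sum>i=s..d. (a i + 1) choose i)))"

end

theory Submission
  imports Defs
begin

lemma choose_mono_n: "a \<le> b \<Longrightarrow> a choose k \<le> b choose k"
proof (induction b)
  case 0 then show ?case by simp
next
  case (Suc b)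
  show ?case
  proof (cases "a = Suc b")
    case True then show ?thesis by simp
  next
    case False
    with Suc.prems have "a \<le> b" by simp
    hence "a choose k \<le> b choose k" by (rule Suc.IH)
    also have "b choose k \<le> Suc b choose k" by (cases k) auto
    finally show ?thesis .
  qed
qed

declare binomial_Suc_Suc[simp del]

lemma top_ex: "\<exists>a. (a choose Suc k) \<le> m \<and> m < (Suc a choose Suc k) \<and> k \<le> a"
proof (induction m)
  case 0 show ?case by (rule exI[of _ k]) simp
next
  case (Suc m)
  then obtain a where a: "(a choose Suc k) \<le> m" "m < (Suc a choose Suc k)" "k \<le> a" by blast
  show ?case
  proof (cases "Suc m < (Suc a choose Suc k)")
    case True with a show ?thesis by (intro exI[of _ a]) auto
  next
    case False
    hence eq: "Suc m = Suc a choose Suc k" using a by simp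
    have "0 < Suc a choose k" using a by simp
    hence "Suc m < Suc (Suc a) choose Suc k" using eq by (simp add: binomial_Suc_Suc)
    with eq a show ?thesis by (intro exI[of _ "Suc a"]) auto
  qed
qed

lemma top_uniq:
  assumes "(a choose Suc k) \<le> m" "m < (Suc a choose Suc k)"
    "(b choose Suc k) \<le> m" "m < (Suc b choose Suc k)"
  shows "a = b"
proof (rule ccontr)
  assume "a \<noteq> b"
  then consider "Suc a \<le> b" | "Suc b \<le> a" by linarith
  then show False
  proof cases
    case 1 then have "Suc a choose Suc k \<le> b choose Suc k" by (rule choose_mono_n)
    with assms show False by linarith
  next
    case 2 then have "Suc b choose Suc k \<le> a choose Suc k" by (rule choose_mono_n)
    with assms show False by linarith
  qed
qed

definition topi :: "nat \<Rightarrow> nat \<Rightarrow> nat" where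
  "topi k m = (THE a. (a choose Suc k) \<le> m \<and> m < (Suc a choose Suc k))"

lemma top_spec: "(topi k m choose Suc k) \<le> m \<and> m < (Suc (topi k m) choose Suc k) \<and> k \<le> topi k m"
proof -
  obtain a where a: "(a choose Suc k) \<le> m" "m < (Suc a choose Suc k)" "k \<le> a"
    using top_ex by blast
  have "topi k m = a" unfolding topi_def
    by (rule the_equality) (use a top_uniq in blast)+
  with a show ?thesis by simp
qed

lemma top_eq: "(a choose Suc k) \<le> m \<Longrightarrow> m < (Suc a choose Suc k) \<Longrightarrow> topi k m = a"
  using top_spec top_uniq by blast

lemma top_ge: "m \<noteq> 0 \<Longrightarrow> Suc k \<le> topi k m"
proof (rule ccontr)
  assume m: "m \<noteq> 0" and "\<not> Suc k \<le> topi k m"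
  hence "Suc (topi k m) \<le> Suc k" by simp
  hence "Suc (topi k m) choose Suc k \<le> Suc k choose Suc k" by (rule choose_mono_n)
  with top_spec[of k m] m show False by simp
qed

lemma top_mono: "m \<le> m' \<Longrightarrow> topi k m \<le> topi k m'"
proof (rule ccontr)
  assume "m \<le> m'" "\<not> topi k m \<le> topi k m'"
  hence "Suc (topi k m') \<le> topi k m" by simp
  hence "Suc (topi k m') choose Suc k \<le> topi k m choose Suc k" by (rule choose_mono_n)
  with top_spec[of k m] top_spec[of k m'] \<open>m \<le> m'\<close> show False by linarith
qed

fun phi :: "nat \<Rightarrow> nat \<Rightarrow> nat" where
  "phi 0 m = 0"
| "phi (Suc k) m = (if m = 0 then 0 else (topi k m choose k) + phi k (m - (topi k m choose Suc k)))"

lemma phi_0 [simp]: "phi k 0 = 0"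
  by (cases k) auto

declare phi.simps(2)[simp del]

lemma phi_rec:
  assumes "Suc k \<le> a" "r < (a choose k)"
  shows "phi (Suc k) ((a choose Suc k) + r) = (a choose k) + phi k r"
proof -
  have t: "topi k ((a choose Suc k) + r) = a"
    by (rule top_eq) (use assms in \<open>simp_all add: binomial_Suc_Suc\<close>)
  have "(a choose Suc k) \<noteq> 0" using assms by simp
  then show ?thesis using t by (simp add: phi.simps(2))
qed

lemma phi_binom: "Suc k \<le> a \<Longrightarrow> phi (Suc k) (a choose Suc k) = a choose k"
  using phi_rec[of k a 0] by simp

lemma phi_binom_sum: "k < a \<Longrightarrow> (a choose k) + phi k (a choose k) = Suc a choose k"
proof (cases k)
  case 0 then show ?thesis by simp
next
  case (Suc j)
  assume "k < a"
  with Suc have "phi (Suc j) (a choose Suc j) = a choose j" by (intro phi_binom) simp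
  with Suc show ?thesis by (simp add: binomial_Suc_Suc)
qed

lemma phi_rec_le:
  assumes "Suc k \<le> a" "r \<le> (a choose k)"
  shows "phi (Suc k) ((a choose Suc k) + r) = (a choose k) + phi k r"
proof (cases "r < (a choose k)")
  case True with assms phi_rec show ?thesis by blast
next
  case False
  with assms have r: "r = a choose k" by simp
  have "phi (Suc k) ((a choose Suc k) + r) = phi (Suc k) (Suc a choose Suc k)" using r by (simp add: binomial_Suc_Suc add.commute)
  also have "\<dots> = Suc a choose k" using assms by (intro phi_binom) simp
  also have "\<dots> = (a choose k) + phi k r" using phi_binom_sum[of k a] assms r by simp
  finally show ?thesis .
qed

lemma phi_unfold:
  assumes "m \<noteq> 0"
  obtains a r where "Suc k \<le> a" "r < (a choose k)" "m = (a choose Suc k) + r"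
    "phi (Suc k) m = (a choose k) + phi k r" "topi k m = a"
proof -
  let ?a = "topi k m"
  let ?r = "m - (?a choose Suc k)"
  have s: "(?a choose Suc k) \<le> m" "m < (Suc ?a choose Suc k)" using top_spec by blast+
  have "Suc k \<le> ?a" using top_ge assms by blast
  moreover have "?r < (?a choose k)" using s by (simp add: binomial_Suc_Suc)
  moreover have "m = (?a choose Suc k) + ?r" using s by simp
  moreover have "phi (Suc k) m = (?a choose k) + phi k ?r" using assms by (simp add: phi.simps(2))
  ultimately show ?thesis using that by blast
qed

lemma phi_ge_top: "m \<noteq> 0 \<Longrightarrow> (topi k m choose k) \<le> phi (Suc k) m"
  by (simp add: phi.simps(2))

lemma phi_mono: "m \<le> m' \<Longrightarrow> phi k m \<le> phi k m'"
proof (induction k arbitrary: m m')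
  case 0 then show ?case by simp
next
  case (Suc k)
  show ?case
  proof (cases "m = 0")
    case True then show ?thesis by simp
  next
    case False
    hence m': "m' \<noteq> 0" using Suc.prems by simp
    obtain a r where ar: "Suc k \<le> a" "r < (a choose k)" "m = (a choose Suc k) + r"
      "phi (Suc k) m = (a choose k) + phi k r" "topi k m = a"
      using phi_unfold[OF False] by blast
    obtain a' r' where ar': "Suc k \<le> a'" "r' < (a' choose k)" "m' = (a' choose Suc k) + r'"
      "phi (Suc k) m' = (a' choose k) + phi k r'" "topi k m' = a'"
      using phi_unfold[OF m'] by blast
    have "a \<le> a'" using top_mono[OF Suc.prems, of k] ar(5) ar'(5) by simp
    show ?thesis
    proof (cases "a = a'")
      case True
      hence "r \<le> r'" using ar ar' Suc.prems by simp
      hence "phi k r \<le> phi k r'" by (rule Suc.IH)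
      with ar ar' True show ?thesis by simp
    next
      case False
      with \<open>a \<le> a'\<close> have "Suc a \<le> a'" by simp
      have "phi k r \<le> phi k (a choose k)" using ar(2) by (intro Suc.IH) simp
      hence "phi (Suc k) m \<le> (a choose k) + phi k (a choose k)" using ar by simp
      also have "\<dots> = Suc a choose k" using ar by (intro phi_binom_sum) simp
      also have "\<dots> \<le> a' choose k" using \<open>Suc a \<le> a'\<close> by (rule choose_mono_n)
      also have "\<dots> \<le> phi (Suc k) m'" using ar' by simp
      finally show ?thesis .
    qed
  qed
qed

definition Kf :: "nat \<Rightarrow> nat \<Rightarrow> nat" where
  "Kf k m = m + phi k m"

lemma Kf_mono: "m \<le> m' \<Longrightarrow> Kf k m \<le> Kf k m'"
  unfolding Kf_def using phi_mono by (simp add: add_mono)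

fun n1 :: "nat \<Rightarrow> nat \<Rightarrow> nat" where
  "n1 0 m = 0"
| "n1 (Suc k) m = (if m = 0 then 0 else (topi k m - 1 choose k) + n1 k (m - (topi k m choose Suc k)))"

lemma n1_0 [simp]: "n1 k 0 = 0"
  by (cases k) auto

declare n1.simps(2)[simp del]

lemma n1_rec:
  assumes "Suc k \<le> a" "r < (a choose k)"
  shows "n1 (Suc k) ((a choose Suc k) + r) = (a - 1 choose k) + n1 k r"
proof -
  have t: "topi k ((a choose Suc k) + r) = a"
    by (rule top_eq) (use assms in \<open>simp_all add: binomial_Suc_Suc\<close>)
  have "(a choose Suc k) \<noteq> 0" using assms by simp
  then show ?thesis using t by (simp add: n1.simps(2))
qed

lemma pascal: "1 \<le> a \<Longrightarrow> (a choose Suc k) = (a - 1 choose k) + (a - 1 choose Suc k)"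
  by (cases a) (auto simp: binomial_Suc_Suc)

lemma n1_le: "n1 k m \<le> m"
proof (induction k arbitrary: m)
  case 0 then show ?case by simp
next
  case (Suc k)
  show ?case
  proof (cases "m = 0")
    case True then show ?thesis by simp
  next
    case False
    obtain a r where ar: "Suc k \<le> a" "r < (a choose k)" "m = (a choose Suc k) + r"
      "topi k m = a" using phi_unfold[OF False] by blast
    have "n1 (Suc k) m = (a - 1 choose k) + n1 k r" using ar n1_rec by simp
    also have "\<dots> \<le> (a - 1 choose k) + r" using Suc.IH by simp
    also have "\<dots> \<le> (a choose Suc k) + r" using pascal[of a k] ar by simp
    finally show ?thesis using ar by simp
  qed
qed

lemma n1_bound: "r \<le> (c choose Suc j) \<Longrightarrow> n1 (Suc j) r \<le> (c - 1 choose j)"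
proof (induction j arbitrary: r c)
  case 0
  then show ?case by (cases "r = 0") (auto simp: n1.simps(2))
next
  case (Suc j)
  show ?case
  proof (cases "r = 0")
    case True then show ?thesis by simp
  next
    case False
    obtain a r' where ar: "Suc (Suc j) \<le> a" "r' < (a choose Suc j)" "r = (a choose Suc (Suc j)) + r'"
      "topi (Suc j) r = a" using phi_unfold[OF False] by blast
    have n: "n1 (Suc (Suc j)) r = (a - 1 choose Suc j) + n1 (Suc j) r'" using ar n1_rec by simp
    have "c \<ge> Suc (Suc j)" using Suc.prems False by (metis binomial_eq_0 le0 le_antisym not_le)
    have "a \<le> c"
    proof (rule ccontr)
      assume "\<not> a \<le> c"
      hence "Suc c \<le> a" by simp
      hence "Suc c choose Suc (Suc j) \<le> a choose Suc (Suc j)" by (rule choose_mono_n)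
      moreover have "(c choose Suc j) > 0" using \<open>c \<ge> Suc (Suc j)\<close> by simp
      ultimately show False using Suc.prems ar by (simp add: binomial_Suc_Suc)
    qed
    show ?thesis
    proof (cases "a = c")
      case True
      hence "r' = 0" using ar Suc.prems by simp
      with n True show ?thesis by simp
    next
      case False
      hence "a \<le> c - 1" using \<open>a \<le> c\<close> by simp
      have "n1 (Suc j) r' \<le> (a - 1 choose j)" using ar(2) by (intro Suc.IH) simp
      hence "n1 (Suc (Suc j)) r \<le> (a - 1 choose Suc j) + (a - 1 choose j)" using n by simp
      also have "\<dots> = a choose Suc j" using pascal[of a j] ar by simp
      also have "\<dots> \<le> (c - 1 choose Suc j)" using \<open>a \<le> c - 1\<close> by (rule choose_mono_n)
      finally show ?thesis .
    qed
  qed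
qed

lemma n1_A: "phi (Suc k) m \<le> Kf k (n1 (Suc k) m)"
proof (induction k arbitrary: m)
  case 0
  show ?case
  proof (cases "m = 0")
    case True then show ?thesis by (simp add: Kf_def)
  next
    case False
    obtain a r where ar: "Suc 0 \<le> a" "r < (a choose 0)" "m = (a choose Suc 0) + r"
      "topi 0 m = a" "phi (Suc 0) m = (a choose 0) + phi 0 r" using phi_unfold[OF False] by blast
    have "n1 (Suc 0) m = 1" using n1_rec[of 0 a r] ar by simp
    with ar show ?thesis by (simp add: Kf_def)
  qed
next
  case (Suc j)
  show ?case
  proof (cases "m = 0")
    case True then show ?thesis by (simp add: Kf_def)
  next
    case False
    obtain a r where ar: "Suc (Suc j) \<le> a" "r < (a choose Suc j)" "m = (a choose Suc (Suc j)) + r"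
      "phi (Suc (Suc j)) m = (a choose Suc j) + phi (Suc j) r" using phi_unfold[OF False] by blast
    define y where "y = n1 (Suc j) r"
    have n: "n1 (Suc (Suc j)) m = (a - 1 choose Suc j) + y" using ar n1_rec y_def by simp
    have yb: "y \<le> (a - 1 choose j)" unfolding y_def using ar(2) by (intro n1_bound) simp
    have p: "phi (Suc j) ((a - 1 choose Suc j) + y) = (a - 1 choose j) + phi j y"
      using ar yb by (intro phi_rec_le) simp_all
    have "Kf (Suc j) (n1 (Suc (Suc j)) m) = (a - 1 choose Suc j) + (a - 1 choose j) + Kf j y"
      using n p by (simp add: Kf_def)
    also have "(a - 1 choose Suc j) + (a - 1 choose j) = a choose Suc j" using pascal[of a j] ar by simp
    finally have e: "Kf (Suc j) (n1 (Suc (Suc j)) m) = (a choose Suc j) + Kf j y" .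
    have "phi (Suc j) r \<le> Kf j y" unfolding y_def by (rule Suc.IH)
    with e ar show ?thesis by simp
  qed
qed

lemma n1_B: "m \<noteq> 0 \<Longrightarrow> n1 (Suc k) m \<le> phi (Suc k) (m - n1 (Suc k) m + 1)"
proof (induction k arbitrary: m)
  case 0
  obtain a r where ar: "Suc 0 \<le> a" "r < (a choose 0)" "m = (a choose Suc 0) + r"
    "topi 0 m = a" using phi_unfold[OF 0] by blast
  have "n1 (Suc 0) m = 1" using n1_rec[of 0 a r] ar by simp
  moreover have "phi (Suc 0) m = 1" using 0 by (simp add: phi.simps(2))
  ultimately show ?case using 0 by simp
next
  case (Suc j)
  obtain a r where ar: "Suc (Suc j) \<le> a" "r < (a choose Suc j)" "m = (a choose Suc (Suc j)) + r"
    using phi_unfold[OF Suc.prems] by blast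
  define y where "y = n1 (Suc j) r"
  have n: "n1 (Suc (Suc j)) m = (a - 1 choose Suc j) + y" using ar n1_rec y_def by simp
  have yb: "y \<le> (a - 1 choose j)" unfolding y_def using ar(2) by (intro n1_bound) simp
  have yr: "y \<le> r" unfolding y_def by (rule n1_le)
  define t where "t = r - y + 1"
  have ps: "(a choose Suc (Suc j)) = (a - 1 choose Suc j) + (a - 1 choose Suc (Suc j))"
    using pascal[of a "Suc j"] ar by simp
  have mt: "m - n1 (Suc (Suc j)) m + 1 = (a - 1 choose Suc (Suc j)) + t"
    unfolding t_def using n ar ps yr by simp
  show ?case
  proof (cases "t < (a - 1 choose Suc j)")
    case True
    have "a - 1 \<noteq> Suc j"
    proof
      assume "a - 1 = Suc j"
      hence "(a - 1 choose Suc j) = 1" by simp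
      with True t_def show False by simp
    qed
    hence a1: "Suc (Suc j) \<le> a - 1" using ar by simp
    have "phi (Suc (Suc j)) ((a - 1 choose Suc (Suc j)) + t) = (a - 1 choose Suc j) + phi (Suc j) t"
      using a1 True by (intro phi_rec) simp_all
    moreover have "y \<le> phi (Suc j) t"
    proof (cases "r = 0")
      case True then show ?thesis by (simp add: y_def)
    next
      case False
      from Suc.IH[OF False] show ?thesis by (simp add: y_def t_def)
    qed
    ultimately show ?thesis using mt n by simp
  next
    case False
    have "(a choose Suc (Suc j)) \<le> (a - 1 choose Suc (Suc j)) + t" using ps False by simp
    hence "phi (Suc (Suc j)) (a choose Suc (Suc j)) \<le> phi (Suc (Suc j)) ((a - 1 choose Suc (Suc j)) + t)"
      by (rule phi_mono)
    moreover have "phi (Suc (Suc j)) (a choose Suc (Suc j)) = a choose Suc j"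
      using ar by (intro phi_binom) simp
    moreover have "(a choose Suc j) = (a - 1 choose j) + (a - 1 choose Suc j)"
      using pascal[of a j] ar by simp
    ultimately show ?thesis using mt n yb by simp
  qed
qed

lemma numN:
  assumes "phi (Suc k) (m - f) \<le> f" "f \<le> m"
  shows "phi (Suc k) m \<le> Kf k f"
proof (cases "n1 (Suc k) m \<le> f")
  case True
  have "phi (Suc k) m \<le> Kf k (n1 (Suc k) m)" by (rule n1_A)
  also have "\<dots> \<le> Kf k f" using True by (rule Kf_mono)
  finally show ?thesis .
next
  case False
  hence m0: "m \<noteq> 0" using n1_le[of "Suc k" m] by auto
  have "m - n1 (Suc k) m + 1 \<le> m - f" using False n1_le[of "Suc k" m] by simp
  hence "phi (Suc k) (m - n1 (Suc k) m + 1) \<le> phi (Suc k) (m - f)" by (rule phi_mono)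
  with n1_B[OF m0, of k] assms False show ?thesis by simp
qed

definition sh :: "nat set set \<Rightarrow> nat set set" where
  "sh G = (\<Union>u\<in>G. (\<lambda>x. u - {x}) ` u)"

lemma sh_iff: "v \<in> sh G \<longleftrightarrow> (\<exists>u\<in>G. \<exists>x\<in>u. v = u - {x})"
  unfolding sh_def by auto

lemma finite_sh: "finite G \<Longrightarrow> \<forall>u\<in>G. finite u \<Longrightarrow> finite (sh G)"
  unfolding sh_def by auto

lemma sh_mono: "G \<subseteq> H \<Longrightarrow> sh G \<subseteq> sh H"
  unfolding sh_def by auto

definition Bs :: "nat \<Rightarrow> nat \<Rightarrow> nat set set" where
  "Bs k a = {u. u \<subseteq> {1..a} \<and> card u = k}"

lemma Bs_card: "card (Bs k a) = a choose k"
  unfolding Bs_def using n_subsets[of "{1..a}" k] by simp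

lemma Bs_finite: "finite (Bs k a)"
  unfolding Bs_def by (rule finite_subset[of _ "Pow {1..a}"]) auto

lemma Bs_mono: "a \<le> a' \<Longrightarrow> Bs k a \<subseteq> Bs k a'"
  unfolding Bs_def by auto

lemma Bs_ins: "v \<in> Bs k a \<Longrightarrow> insert (Suc a) v \<in> Bs (Suc k) (Suc a)"
proof -
  assume v: "v \<in> Bs k a"
  hence "v \<subseteq> {1..a}" "card v = k" unfolding Bs_def by auto
  moreover have "finite v" using \<open>v \<subseteq> {1..a}\<close> finite_subset by blast
  moreover have "Suc a \<notin> v" using \<open>v \<subseteq> {1..a}\<close> by auto
  ultimately show ?thesis unfolding Bs_def by auto
qed

lemma Bs_dsub: "Bs k a \<subseteq> dsubsets k"
  unfolding Bs_def dsubsets_def using finite_subset by fastforce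

lemma Bs_empty: "a < k \<Longrightarrow> Bs k a = {}"
proof -
  assume "a < k"
  { fix u assume "u \<subseteq> {1..a}" "card u = k"
    hence "card u \<le> card {1..a}" by (intro card_mono) auto
    with \<open>a < k\<close> \<open>card u = k\<close> have False by simp }
  thus ?thesis unfolding Bs_def by auto
qed

fun colex :: "nat \<Rightarrow> nat \<Rightarrow> nat set set" where
  "colex 0 m = (if m = 0 then {} else {{}})"
| "colex (Suc k) m = (if m = 0 then {} else Bs (Suc k) (topi k m) \<union>
      insert (Suc (topi k m)) ` colex k (m - (topi k m choose Suc k)))"

lemma colex_0 [simp]: "colex k 0 = {}"
  by (cases k) auto

declare colex.simps(2)[simp del]

lemma colex_rec:
  assumes "Suc k \<le> a" "r < (a choose k)"
  shows "colex (Suc k) ((a choose Suc k) + r) = Bs (Suc k) a \<union> insert (Suc a) ` colex k r"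
proof -
  have t: "topi k ((a choose Suc k) + r) = a"
    by (rule top_eq) (use assms in \<open>simp_all add: binomial_Suc_Suc\<close>)
  have "(a choose Suc k) \<noteq> 0" using assms by simp
  then show ?thesis using t by (simp add: colex.simps(2))
qed

lemma colex_binom: "colex k (a choose k) = Bs k a"
proof (cases k)
  case 0
  have "Bs 0 a = {{}}" unfolding Bs_def using finite_subset by fastforce
  then show ?thesis using 0 by simp
next
  case (Suc j)
  show ?thesis
  proof (cases "a < k")
    case True
    then show ?thesis by (simp add: binomial_eq_0 Bs_empty[OF True])
  next
    case False
    then show ?thesis using colex_rec[of j a 0] Suc by simp
  qed
qed

lemma colex_props:
  "(\<forall>m m'. m \<le> m' \<longrightarrow> colex k m \<subseteq> colex k m') \<and> (\<forall>m. (k = 0 \<longrightarrow> m \<le> 1) \<longrightarrow> card (colex k m) = m)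
   \<and> (\<forall>m. colex k m \<subseteq> dsubsets k) \<and> (\<forall>m. finite (colex k m))"
proof (induction k)
  case 0
  have "{{}} \<subseteq> dsubsets 0" unfolding dsubsets_def by auto
  moreover have "card (colex 0 m) = m" if "m \<le> 1" for m using that by (cases m) auto
  ultimately show ?case by auto
next
  case (Suc k)
  have nest: "colex k m \<subseteq> colex k m'" if "m \<le> m'" for m m' using Suc.IH that by blast
  have sub: "colex k r \<subseteq> Bs k a" if "r \<le> a choose k" for r a
    using nest[OF that] colex_binom by simp
  have up: "colex (Suc k) m \<subseteq> Bs (Suc k) (Suc (topi k m))" for m
  proof (cases "m = 0")
    case True then show ?thesis by simp
  next
    case False
    obtain a r where ar: "Suc k \<le> a" "r < (a choose k)" "m = (a choose Suc k) + r" "topi k m = a"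
      using phi_unfold[OF False] by blast
    have "colex (Suc k) m = Bs (Suc k) a \<union> insert (Suc a) ` colex k r"
      using ar colex_rec by simp
    also have "\<dots> \<subseteq> Bs (Suc k) (Suc a)"
      using Bs_mono[of a "Suc a"] sub[of r a] ar Bs_ins by auto
    finally show ?thesis using ar by simp
  qed
  have P1: "colex (Suc k) m \<subseteq> colex (Suc k) m'" if "m \<le> m'" for m m'
  proof (cases "m = 0")
    case True then show ?thesis by simp
  next
    case False
    hence m': "m' \<noteq> 0" using that by simp
    obtain a r where ar: "Suc k \<le> a" "r < (a choose k)" "m = (a choose Suc k) + r" "topi k m = a"
      using phi_unfold[OF False] by blast
    obtain a' r' where ar': "Suc k \<le> a'" "r' < (a' choose k)" "m' = (a' choose Suc k) + r'" "topi k m' = a'"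
      using phi_unfold[OF m'] by blast
    have "a \<le> a'" using top_mono[OF that, of k] ar ar' by simp
    have e: "colex (Suc k) m = Bs (Suc k) a \<union> insert (Suc a) ` colex k r" using ar colex_rec by simp
    have e': "colex (Suc k) m' = Bs (Suc k) a' \<union> insert (Suc a') ` colex k r'" using ar' colex_rec by simp
    show ?thesis
    proof (cases "a = a'")
      case True
      hence "r \<le> r'" using ar ar' that by simp
      then show ?thesis using e e' True nest by blast
    next
      case False
      hence "Suc a \<le> a'" using \<open>a \<le> a'\<close> by simp
      have "colex (Suc k) m \<subseteq> Bs (Suc k) (Suc a)" using up[of m] ar by simp
      also have "\<dots> \<subseteq> Bs (Suc k) a'" by (rule Bs_mono) fact
      also have "\<dots> \<subseteq> colex (Suc k) m'" using e' by blast
      finally show ?thesis .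
    qed
  qed
  have P2: "card (colex (Suc k) m) = m" for m
  proof (cases "m = 0")
    case True then show ?thesis by simp
  next
    case False
    obtain a r where ar: "Suc k \<le> a" "r < (a choose k)" "m = (a choose Suc k) + r" "topi k m = a"
      using phi_unfold[OF False] by blast
    have e: "colex (Suc k) m = Bs (Suc k) a \<union> insert (Suc a) ` colex k r" using ar colex_rec by simp
    have s: "colex k r \<subseteq> Bs k a" using sub[of r a] ar by simp
    have fin: "finite (colex k r)" using s Bs_finite finite_subset by blast
    have disj: "Bs (Suc k) a \<inter> insert (Suc a) ` colex k r = {}" unfolding Bs_def by auto
    have inj: "inj_on (insert (Suc a)) (colex k r)"
    proof (rule inj_onI)
      fix x y assume "x \<in> colex k r" "y \<in> colex k r" "insert (Suc a) x = insert (Suc a) y"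
      moreover have "x \<subseteq> {1..a}" "y \<subseteq> {1..a}" using s \<open>x \<in> colex k r\<close> \<open>y \<in> colex k r\<close>
        unfolding Bs_def by auto
      moreover have "Suc a \<notin> x" "Suc a \<notin> y" using calculation(4,5) by auto
      ultimately show "x = y" by (metis insert_ident)
    qed
    have "k = 0 \<longrightarrow> r \<le> 1" using ar by auto
    hence "card (colex k r) = r" using Suc.IH by blast
    have "card (colex (Suc k) m) = card (Bs (Suc k) a) + card (insert (Suc a) ` colex k r)"
      unfolding e by (rule card_Un_disjoint) (use Bs_finite fin disj in auto)
    also have "\<dots> = (a choose Suc k) + r" using Bs_card card_image[OF inj] \<open>card (colex k r) = r\<close> by simp
    finally show ?thesis using ar by simp
  qed
  have P3: "colex (Suc k) m \<subseteq> dsubsets (Suc k)" for m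
    using up[of m] Bs_dsub by blast
  have P4: "finite (colex (Suc k) m)" for m
    using up[of m] Bs_finite finite_subset by blast
  show ?case using P1 P2 P3 P4 by blast
qed

lemma colex_nest: "m \<le> m' \<Longrightarrow> colex k m \<subseteq> colex k m'"
  using colex_props by blast

lemma colex_card: "card (colex (Suc k) m) = m"
  using colex_props by blast

lemma colex_finite: "finite (colex k m)"
  using colex_props by blast

lemma colex_card_le: "card (colex k m) \<le> m"
  by (cases k) (auto simp: colex_card)

lemma colex_dsub: "colex k m \<subseteq> dsubsets k"
  using colex_props by blast

lemma colex_sub: "r \<le> a choose k \<Longrightarrow> colex k r \<subseteq> Bs k a"
  using colex_nest[of r "a choose k" k] colex_binom by simp

lemma sh_Bs: "sh (Bs (Suc k) a) \<subseteq> Bs k a"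
proof
  fix v assume "v \<in> sh (Bs (Suc k) a)"
  then obtain u x where u: "u \<in> Bs (Suc k) a" "x \<in> u" "v = u - {x}" unfolding sh_iff by blast
  hence "u \<subseteq> {1..a}" "card u = Suc k" unfolding Bs_def by auto
  moreover have "finite u" using \<open>u \<subseteq> {1..a}\<close> finite_subset by blast
  ultimately show "v \<in> Bs k a" using u unfolding Bs_def by auto
qed

lemma sh_colex: "sh (colex (Suc k) m) \<subseteq> colex k (phi (Suc k) m)"
proof (induction k arbitrary: m)
  case 0
  show ?case
  proof (cases "m = 0")
    case True then show ?thesis by (simp add: sh_def)
  next
    case False
    have "phi (Suc 0) m = 1" using False by (simp add: phi.simps(2))
    moreover have "sh (colex (Suc 0) m) \<subseteq> {{}}"
    proof
      fix v assume "v \<in> sh (colex (Suc 0) m)"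
      then obtain u x where u: "u \<in> colex (Suc 0) m" "x \<in> u" "v = u - {x}" unfolding sh_iff by blast
      have "card u = 1" using u colex_dsub[of 1 m] unfolding dsubsets_def by auto
      then obtain b where "u = {b}" by (auto simp: card_Suc_eq)
      with u show "v \<in> {{}}" by auto
    qed
    ultimately show ?thesis by simp
  qed
next
  case (Suc k)
  show ?case
  proof (cases "m = 0")
    case True then show ?thesis by (simp add: sh_def)
  next
    case False
    obtain a r where ar: "Suc (Suc k) \<le> a" "r < (a choose Suc k)" "m = (a choose Suc (Suc k)) + r"
      "phi (Suc (Suc k)) m = (a choose Suc k) + phi (Suc k) r"
      using phi_unfold[OF False] by blast
    have e: "colex (Suc (Suc k)) m = Bs (Suc (Suc k)) a \<union> insert (Suc a) ` colex (Suc k) r"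
      using ar colex_rec by simp
    have s: "colex (Suc k) r \<subseteq> Bs (Suc k) a" using colex_sub ar by simp
    define T where "T = colex (Suc k) (phi (Suc (Suc k)) m)"
    have BT: "Bs (Suc k) a \<subseteq> T" unfolding T_def using ar colex_nest[of "a choose Suc k"] colex_binom
      by (metis le_add1)
    show ?thesis
    proof
      fix v assume "v \<in> sh (colex (Suc (Suc k)) m)"
      then obtain u x where u: "u \<in> colex (Suc (Suc k)) m" "x \<in> u" "v = u - {x}" unfolding sh_iff by blast
      show "v \<in> colex (Suc k) (phi (Suc (Suc k)) m)"
      proof (cases "u \<in> Bs (Suc (Suc k)) a")
        case True
        hence "v \<in> sh (Bs (Suc (Suc k)) a)" using u unfolding sh_iff by blast
        hence "v \<in> Bs (Suc k) a" using sh_Bs by blast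
        with BT show ?thesis unfolding T_def by blast
      next
        case False
        with u e obtain c where c: "c \<in> colex (Suc k) r" "u = insert (Suc a) c" by blast
        have cB: "c \<in> Bs (Suc k) a" using c s by blast
        hence "Suc a \<notin> c" unfolding Bs_def by auto
        show ?thesis
        proof (cases "x = Suc a")
          case True
          hence "v = c" using u c \<open>Suc a \<notin> c\<close> by auto
          with cB BT show ?thesis unfolding T_def by blast
        next
          case False
          hence xc: "x \<in> c" using u c by auto
          have v: "v = insert (Suc a) (c - {x})" using u c False by auto
          have "c - {x} \<in> sh (colex (Suc k) r)" using c xc unfolding sh_iff by blast
          hence cp: "c - {x} \<in> colex k (phi (Suc k) r)" using Suc.IH by blast
          show ?thesis
          proof (cases "phi (Suc k) r < (a choose k)")
            case True
            have "T = Bs (Suc k) a \<union> insert (Suc a) ` colex k (phi (Suc k) r)"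
              unfolding T_def ar(4) using ar True by (intro colex_rec) simp_all
            with cp v show ?thesis unfolding T_def by blast
          next
            case False
            have "(Suc a choose Suc k) \<le> phi (Suc (Suc k)) m"
              using ar False by (simp add: binomial_Suc_Suc)
            hence "Bs (Suc k) (Suc a) \<subseteq> T" unfolding T_def
              using colex_nest colex_binom by metis
            moreover have "c - {x} \<in> sh (Bs (Suc k) a)" using cB xc unfolding sh_iff by blast
            hence "c - {x} \<in> Bs k a" using sh_Bs by blast
            ultimately show ?thesis using Bs_ins v unfolding T_def by blast
          qed
        qed
      qed
    qed
  qed
qed

lemma card_sh_colex: "card (sh (colex k m)) \<le> phi k m"
proof (cases k)
  case 0
  have "sh (colex 0 m) = {}" by (auto simp: sh_def)
  then show ?thesis using 0 by simp
next
  case (Suc j)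
  have "card (sh (colex (Suc j) m)) \<le> card (colex j (phi (Suc j) m))"
    using sh_colex by (intro card_mono colex_finite)
  then show ?thesis using Suc colex_card_le le_trans by blast
qed

definition sfun :: "nat set set \<Rightarrow> nat \<Rightarrow> nat set \<Rightarrow> nat set" where
  "sfun G z u = (if z \<in> u \<and> 1 \<notin> u \<and> insert 1 (u - {z}) \<notin> G then insert 1 (u - {z}) else u)"

definition shiftF :: "nat \<Rightarrow> nat set set \<Rightarrow> nat set set" where
  "shiftF z G = sfun G z ` G"

definition stable :: "nat set set \<Rightarrow> bool" where
  "stable G = (\<forall>u\<in>G. \<forall>z\<in>u. 1 \<notin> u \<longrightarrow> insert 1 (u - {z}) \<in> G)"

lemma sfun_yes: "z \<in> u \<Longrightarrow> 1 \<notin> u \<Longrightarrow> insert 1 (u - {z}) \<notin> G \<Longrightarrow> sfun G z u = insert 1 (u - {z})"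
  unfolding sfun_def by simp

lemma sfun_no: "\<not> (z \<in> u \<and> 1 \<notin> u \<and> insert 1 (u - {z}) \<notin> G) \<Longrightarrow> sfun G z u = u"
  unfolding sfun_def by metis

lemma sfun_inj: "inj_on (sfun G z) G"
proof (rule inj_onI)
  fix u v assume uv: "u \<in> G" "v \<in> G" "sfun G z u = sfun G z v"
  show "u = v"
  proof (cases "z \<in> u \<and> 1 \<notin> u \<and> insert 1 (u - {z}) \<notin> G")
    case cu: True
    show ?thesis
    proof (cases "z \<in> v \<and> 1 \<notin> v \<and> insert 1 (v - {z}) \<notin> G")
      case cv: True
      with cu uv have e: "insert 1 (u - {z}) = insert 1 (v - {z})" by (simp add: sfun_yes)
      have "u - {z} = v - {z}"
      proof -
        have "u - {z} = insert 1 (u - {z}) - {1}" using cu by auto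
        also have "\<dots> = insert 1 (v - {z}) - {1}" using e by simp
        also have "\<dots> = v - {z}" using cv by auto
        finally show ?thesis .
      qed
      with cu cv show ?thesis by (metis insert_Diff)
    next
      case cv: False
      with cu uv have "insert 1 (u - {z}) = v" using sfun_yes[of z u G] sfun_no[OF cv] by simp
      with cu uv show ?thesis by simp
    qed
  next
    case cu: False
    show ?thesis
    proof (cases "z \<in> v \<and> 1 \<notin> v \<and> insert 1 (v - {z}) \<notin> G")
      case cv: True
      with cu uv have "u = insert 1 (v - {z})" using sfun_yes[of z v G] sfun_no[OF cu] by simp
      with cv uv show ?thesis by simp
    next
      case cv: False
      with cu uv show ?thesis using sfun_no[OF cu] sfun_no[OF cv] by simp
    qed
  qed
qed

lemma card_shiftF: "card (shiftF z G) = card G"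
  unfolding shiftF_def using sfun_inj card_image by blast

lemma shiftF_iff:
  "v \<in> shiftF z G \<longleftrightarrow> (\<exists>u\<in>G. v = sfun G z u)"
  unfolding shiftF_def by auto

lemma shiftF_I: "u \<in> G \<Longrightarrow> sfun G z u = v \<Longrightarrow> v \<in> shiftF z G"
  unfolding shiftF_def by blast

lemma shiftF_dsub: "G \<subseteq> dsubsets k \<Longrightarrow> shiftF z G \<subseteq> dsubsets k"
proof
  fix v assume G: "G \<subseteq> dsubsets k" and "v \<in> shiftF z G"
  then obtain u where u: "u \<in> G" "v = sfun G z u" unfolding shiftF_iff by blast
  have ud: "finite u" "card u = k" "\<forall>x\<in>u. 1 \<le> x" using u G unfolding dsubsets_def by auto
  show "v \<in> dsubsets k"
  proof (cases "z \<in> u \<and> 1 \<notin> u \<and> insert 1 (u - {z}) \<notin> G")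
    case True
    hence v: "v = insert 1 (u - {z})" using u sfun_yes[of z u G] by simp
    have "card v = Suc (card (u - {z}))" using v True ud by simp
    also have "\<dots> = card u" using True ud
      by (metis card_Suc_Diff1)
    finally show ?thesis using v ud unfolding dsubsets_def by auto
  next
    case False
    hence "v = u" using u sfun_no[of z u G] by simp
    with u G show ?thesis by auto
  qed
qed

lemma sh_I: "u \<in> G \<Longrightarrow> x \<in> u \<Longrightarrow> u - {x} \<in> sh G"
  unfolding sh_iff by blast

lemma sh_shiftF: "sh (shiftF z G) \<subseteq> shiftF z (sh G)"
proof
  fix v assume "v \<in> sh (shiftF z G)"
  then obtain A x where A: "A \<in> shiftF z G" "x \<in> A" "v = A - {x}" unfolding sh_iff by blast
  then obtain B where B: "B \<in> G" "A = sfun G z B" unfolding shiftF_iff by blast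
  show "v \<in> shiftF z (sh G)"
  proof (cases "z \<in> B \<and> 1 \<notin> B \<and> insert 1 (B - {z}) \<notin> G")
    case False
    hence AB: "A = B" using B sfun_no[OF False] by simp
    have vsh: "v \<in> sh G" using A AB B sh_I[of B G x] by simp
    have "sfun (sh G) z v = v"
    proof (cases "z \<in> v \<and> 1 \<notin> v")
      case False then show ?thesis by (intro sfun_no) blast
    next
      case True
      show ?thesis
      proof (cases "x = 1")
        case True
        hence "insert 1 (v - {z}) = A - {z}" using A \<open>z \<in> v \<and> 1 \<notin> v\<close> by auto
        moreover have "z \<in> A" using A \<open>z \<in> v \<and> 1 \<notin> v\<close> by auto
        ultimately have "insert 1 (v - {z}) \<in> sh G" using B AB sh_I[of B G z] by simp
        then show ?thesis by (intro sfun_no) simp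
      next
        case False
        have "z \<in> B" "1 \<notin> B" using A AB \<open>z \<in> v \<and> 1 \<notin> v\<close> False by auto
        hence "insert 1 (B - {z}) \<in> G" using \<open>\<not> (z \<in> B \<and> 1 \<notin> B \<and> insert 1 (B - {z}) \<notin> G)\<close> by blast
        moreover have "x \<in> insert 1 (B - {z})" using A AB \<open>z \<in> v \<and> 1 \<notin> v\<close> by auto
        moreover have "insert 1 (v - {z}) = insert 1 (B - {z}) - {x}"
          using A AB False \<open>z \<in> v \<and> 1 \<notin> v\<close> by auto
        ultimately have "insert 1 (v - {z}) \<in> sh G" using sh_I[of "insert 1 (B - {z})" G x] by simp
        then show ?thesis by (intro sfun_no) simp
      qed
    qed
    with vsh show ?thesis by (rule shiftF_I)
  next
    case True
    hence AB: "A = insert 1 (B - {z})" "A \<notin> G" using B sfun_yes[of z B G] by auto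
    show ?thesis
    proof (cases "x = 1")
      case True
      hence v: "v = B - {z}" using A AB \<open>z \<in> B \<and> 1 \<notin> B \<and> insert 1 (B - {z}) \<notin> G\<close> by auto
      have "v \<in> sh G" using B v \<open>z \<in> B \<and> 1 \<notin> B \<and> _\<close> sh_I[of B G z] by simp
      moreover have "sfun (sh G) z v = v" using v by (intro sfun_no) simp
      ultimately show ?thesis by (rule shiftF_I)
    next
      case False
      have xB: "x \<in> B" "x \<noteq> z" using A AB False by auto
      have v: "v = insert 1 (B - {z} - {x})" using A AB False by auto
      have w: "B - {x} \<in> sh G" using B xB sh_I by blast
      show ?thesis
      proof (cases "v \<in> sh G")
        case True
        have "sfun (sh G) z v = v" using v by (intro sfun_no) simp
        with True show ?thesis by (rule shiftF_I)
      next
        case False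
        have "insert 1 ((B - {x}) - {z}) = v" using v by auto
        moreover have "z \<in> B - {x}" "1 \<notin> B - {x}" using xB \<open>z \<in> B \<and> 1 \<notin> B \<and> _\<close> by auto
        ultimately have "sfun (sh G) z (B - {x}) = v" using False sfun_yes[of z "B - {x}" "sh G"] by simp
        with w show ?thesis by (rule shiftF_I)
      qed
    qed
  qed
qed

lemma dsub_fin: "G \<subseteq> dsubsets k \<Longrightarrow> \<forall>u\<in>G. finite u"
  unfolding dsubsets_def by auto

lemma card_sh_shiftF:
  assumes "finite G" "G \<subseteq> dsubsets k"
  shows "card (sh (shiftF z G)) \<le> card (sh G)"
proof -
  have "finite (sh G)" using finite_sh assms dsub_fin by blast
  hence "finite (shiftF z (sh G))" unfolding shiftF_def by simp
  hence "card (sh (shiftF z G)) \<le> card (shiftF z (sh G))" using sh_shiftF by (intro card_mono)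
  also have "\<dots> = card (sh G)" by (rule card_shiftF)
  finally show ?thesis .
qed

definition mu :: "nat set set \<Rightarrow> nat" where
  "mu G = (\<Sum>u\<in>G. \<Sum>u)"

lemma sum_sfun_le:
  assumes "finite u" "\<forall>x\<in>u. 1 \<le> x"
  shows "\<Sum>(sfun G z u) \<le> \<Sum>u"
proof (cases "z \<in> u \<and> 1 \<notin> u \<and> insert 1 (u - {z}) \<notin> G")
  case True
  have e1: "\<Sum>(sfun G z u) = \<Sum>(insert 1 (u - {z}))" using True sfun_yes[of z u G] by simp
  have e2: "\<Sum>(insert 1 (u - {z})) = 1 + \<Sum>(u - {z})" using True assms by (simp add: sum.insert)
  have e3: "\<Sum>(u - {z}) = \<Sum>u - z" using True assms by (simp add: sum_diff1_nat)
  have "\<Sum>{z} \<le> \<Sum>u" by (rule sum_mono2) (use True assms in auto)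
  hence e4: "z \<le> \<Sum>u" by simp
  have e5: "1 \<le> z" using True assms by blast
  show ?thesis using e1 e2 e3 e4 e5 by linarith
qed (simp add: sfun_no)

lemma sum_sfun_less:
  assumes "finite u" "\<forall>x\<in>u. 1 \<le> x" "z \<in> u" "1 \<notin> u" "insert 1 (u - {z}) \<notin> G"
  shows "\<Sum>(sfun G z u) < \<Sum>u"
proof -
  have "1 \<le> z" "z \<noteq> 1" using assms by auto
  hence z2: "2 \<le> z" by linarith
  have e1: "\<Sum>(sfun G z u) = \<Sum>(insert 1 (u - {z}))" using assms sfun_yes[of z u G] by simp
  have e2: "\<Sum>(insert 1 (u - {z})) = 1 + \<Sum>(u - {z})" using assms by (simp add: sum.insert)
  have e3: "\<Sum>(u - {z}) = \<Sum>u - z" using assms by (simp add: sum_diff1_nat)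
  have "\<Sum>{z} \<le> \<Sum>u" by (rule sum_mono2) (use assms in auto)
  hence e4: "z \<le> \<Sum>u" by simp
  show ?thesis using e1 e2 e3 e4 z2 by linarith
qed

lemma mu_shiftF_less:
  assumes "finite G" "G \<subseteq> dsubsets k" "u \<in> G" "z \<in> u" "1 \<notin> u" "insert 1 (u - {z}) \<notin> G"
  shows "mu (shiftF z G) < mu G"
proof -
  have fin: "finite w" "\<forall>x\<in>w. 1 \<le> x" if "w \<in> G" for w
    using assms(2) that unfolding dsubsets_def by auto
  have "mu (shiftF z G) = sum ((\<lambda>w. \<Sum>w) \<circ> sfun G z) G"
    unfolding mu_def shiftF_def by (rule sum.reindex[OF sfun_inj])
  also have "\<dots> = (\<Sum>w\<in>G. \<Sum>(sfun G z w))" by simp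
  also have "\<dots> < (\<Sum>w\<in>G. \<Sum>w)"
  proof (rule sum_strict_mono_ex1[OF assms(1)])
    show "\<forall>w\<in>G. \<Sum>(sfun G z w) \<le> \<Sum>w"
    proof
      fix w assume "w \<in> G"
      show "\<Sum>(sfun G z w) \<le> \<Sum>w" by (rule sum_sfun_le[OF fin[OF \<open>w \<in> G\<close>]])
    qed
    have "\<Sum>(sfun G z u) < \<Sum>u" by (rule sum_sfun_less[OF fin[OF assms(3)] assms(4-6)])
    then show "\<exists>w\<in>G. \<Sum>(sfun G z w) < \<Sum>w" using assms(3) by blast
  qed
  finally show ?thesis unfolding mu_def .
qed

lemma stabilize:
  "finite G \<Longrightarrow> G \<subseteq> dsubsets k \<Longrightarrow> \<exists>G'. finite G' \<and> G' \<subseteq> dsubsets k \<and> card G' = card G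
     \<and> card (sh G') \<le> card (sh G) \<and> stable G'"
proof (induction G rule: measure_induct_rule[of mu])
  case (less G)
  show ?case
  proof (cases "stable G")
    case True with less.prems show ?thesis by blast
  next
    case False
    then obtain u z where uz: "u \<in> G" "z \<in> u" "1 \<notin> u" "insert 1 (u - {z}) \<notin> G"
      unfolding stable_def by blast
    let ?H = "shiftF z G"
    have h1: "mu ?H < mu G" by (rule mu_shiftF_less[OF less.prems uz])
    have h2: "finite ?H" using less.prems(1) unfolding shiftF_def by simp
    have h3: "?H \<subseteq> dsubsets k" by (rule shiftF_dsub[OF less.prems(2)])
    obtain G' where G': "finite G'" "G' \<subseteq> dsubsets k" "card G' = card ?H"
      "card (sh G') \<le> card (sh ?H)" "stable G'" using less.IH[OF h1 h2 h3] by blast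
    have h4: "card (sh ?H) \<le> card (sh G)" by (rule card_sh_shiftF[OF less.prems])
    have h5: "card ?H = card G" by (rule card_shiftF)
    show ?thesis
      by (rule exI[of _ G'], intro conjI) (use G' h4 h5 in simp_all)
  qed
qed

lemma KK_stable_step:
  assumes fin: "finite G" and G: "G \<subseteq> dsubsets (Suc j)" and st: "stable G"
    and IH0: "\<And>H. finite H \<Longrightarrow> H \<subseteq> dsubsets (Suc j) \<Longrightarrow> card H < card G \<Longrightarrow> phi (Suc j) (card H) \<le> card (sh H)"
    and IHj: "\<And>H. finite H \<Longrightarrow> H \<subseteq> dsubsets j \<Longrightarrow> phi j (card H) \<le> card (sh H)"
  shows "phi (Suc j) (card G) \<le> card (sh G)"
proof (cases "G = {}")
  case True then show ?thesis by simp
next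
  case False
  define G1 where "G1 = {u\<in>G. 1 \<in> u}"
  define G0 where "G0 = {u\<in>G. 1 \<notin> u}"
  define W where "W = (\<lambda>u. u - {1}) ` G1"
  have Gd: "\<forall>u\<in>G. finite u \<and> card u = Suc j \<and> (\<forall>x\<in>u. 1 \<le> x)" using G unfolding dsubsets_def by auto
  have cG: "card G = card G1 + card G0"
  proof -
    have "G = G1 \<union> G0" "G1 \<inter> G0 = {}" unfolding G1_def G0_def by auto
    moreover have "finite G1" "finite G0" using fin unfolding G1_def G0_def by auto
    ultimately show ?thesis by (simp add: card_Un_disjoint)
  qed
  have inj: "inj_on (\<lambda>u. u - {1}) G1"
  proof (rule inj_onI)
    fix x y assume "x \<in> G1" "y \<in> G1" "x - {1} = y - {1}"
    moreover have "1 \<in> x" "1 \<in> y" using calculation unfolding G1_def by auto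
    ultimately show "x = y" by (metis insert_Diff)
  qed
  have cW: "card W = card G1" unfolding W_def using card_image[OF inj] .
  have Wd: "W \<subseteq> dsubsets j"
  proof
    fix w assume "w \<in> W"
    then obtain u where u: "u \<in> G1" "w = u - {1}" unfolding W_def by blast
    hence "u \<in> G" "1 \<in> u" unfolding G1_def by auto
    with Gd u show "w \<in> dsubsets j" unfolding dsubsets_def by auto
  qed
  have finW: "finite W" unfolding W_def G1_def using fin by simp
  have G1ne: "G1 \<noteq> {}"
  proof -
    obtain u where u: "u \<in> G" using False by blast
    show ?thesis
    proof (cases "1 \<in> u")
      case True with u show ?thesis unfolding G1_def by blast
    next
      case nu: False
      have "u \<noteq> {}" using Gd u by auto
      then obtain z where "z \<in> u" by blast
      hence "insert 1 (u - {z}) \<in> G" using st u nu unfolding stable_def by blast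
      then show ?thesis unfolding G1_def by blast
    qed
  qed
  have "finite G1" using fin unfolding G1_def by simp
  hence "card G1 > 0" using G1ne by (simp add: card_gt_0_iff)
  hence lt: "card G0 < card G" using cG by simp
  have G0d: "G0 \<subseteq> dsubsets (Suc j)" "finite G0" using G fin unfolding G0_def by auto
  have sh0: "sh G0 \<subseteq> W"
  proof
    fix v assume "v \<in> sh G0"
    then obtain u x where u: "u \<in> G0" "x \<in> u" "v = u - {x}" unfolding sh_iff by blast
    hence "insert 1 (u - {x}) \<in> G" using st unfolding stable_def G0_def by blast
    hence "insert 1 (u - {x}) \<in> G1" unfolding G1_def by simp
    moreover have "v = insert 1 (u - {x}) - {1}" using u unfolding G0_def by auto
    ultimately show "v \<in> W" unfolding W_def by blast
  qed
  have "phi (Suc j) (card G0) \<le> card (sh G0)" using IH0 G0d lt by blast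
  also have "\<dots> \<le> card W" using sh0 finW by (intro card_mono)
  finally have h1: "phi (Suc j) (card G - card W) \<le> card W" using cG cW by simp
  have h2: "phi j (card W) \<le> card (sh W)" using IHj finW Wd by blast
  have sup: "W \<union> insert 1 ` sh W \<subseteq> sh G"
  proof
    fix v assume "v \<in> W \<union> insert 1 ` sh W"
    then consider "v \<in> W" | "v \<in> insert 1 ` sh W" by blast
    then show "v \<in> sh G"
    proof cases
      case 1
      then obtain u where "u \<in> G1" "v = u - {1}" unfolding W_def by blast
      then show ?thesis unfolding sh_iff G1_def by blast
    next
      case 2
      then obtain w where w: "w \<in> sh W" "v = insert 1 w" by blast
      then obtain w0 x where w0: "w0 \<in> W" "x \<in> w0" "w = w0 - {x}" unfolding sh_iff by blast
      then obtain u where u: "u \<in> G1" "w0 = u - {1}" unfolding W_def by blast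
      have "1 \<in> u" using u unfolding G1_def by simp
      hence "v = u - {x}" using w w0 u by auto
      moreover have "x \<in> u" using w0 u by auto
      ultimately show ?thesis using u unfolding sh_iff G1_def by blast
    qed
  qed
  have W1: "1 \<notin> w" if "w \<in> W" for w using that unfolding W_def by blast
  have shW1: "1 \<notin> w" if wsh: "w \<in> sh W" for w
  proof -
    obtain w0 x where "w0 \<in> W" "x \<in> w0" "w = w0 - {x}" using wsh unfolding sh_iff by blast
    with W1 show ?thesis by blast
  qed
  have disj: "W \<inter> insert 1 ` sh W = {}" using W1 by blast
  have injW: "inj_on (insert 1) (sh W)"
  proof (rule inj_onI)
    fix x y assume xy: "x \<in> sh W" "y \<in> sh W" "insert 1 x = insert 1 y"
    have "1 \<notin> x" "1 \<notin> y" using xy(1,2) shW1 by blast+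
    with xy(3) show "x = y" by (metis insert_ident)
  qed
  have finshW: "finite (sh W)" using finite_sh finW Wd dsub_fin by blast
  have finshG: "finite (sh G)" using finite_sh fin G dsub_fin by blast
  have "card W + card (sh W) = card (W \<union> insert 1 ` sh W)"
    using disj finW finshW card_image[OF injW] by (simp add: card_Un_disjoint)
  also have "\<dots> \<le> card (sh G)" using sup finshG by (intro card_mono)
  finally have h3: "card W + card (sh W) \<le> card (sh G)" .
  have "card W \<le> card G" using cG cW by simp
  hence "phi (Suc j) (card G) \<le> Kf j (card W)" using numN h1 by blast
  also have "\<dots> \<le> card (sh G)" unfolding Kf_def using h2 h3 by simp
  finally show ?thesis .
qed

theorem KK: "finite G \<Longrightarrow> G \<subseteq> dsubsets k \<Longrightarrow> phi k (card G) \<le> card (sh G)"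
proof (induction k arbitrary: G)
  case 0 then show ?case by simp
next
  case (Suc j)
  have IHj: "\<And>H. finite H \<Longrightarrow> H \<subseteq> dsubsets j \<Longrightarrow> phi j (card H) \<le> card (sh H)"
    using Suc.IH by blast
  have main: "\<forall>G. card G = n \<longrightarrow> finite G \<longrightarrow> G \<subseteq> dsubsets (Suc j) \<longrightarrow> phi (Suc j) (card G) \<le> card (sh G)" for n
  proof (induction n rule: less_induct)
    case (less n)
    show ?case
    proof (intro allI impI)
      fix G assume G: "card G = n" "finite G" "G \<subseteq> dsubsets (Suc j)"
      obtain G' where G': "finite G'" "G' \<subseteq> dsubsets (Suc j)" "card G' = card G"
        "card (sh G') \<le> card (sh G)" "stable G'" using stabilize[OF G(2,3)] by blast
      have IH0: "phi (Suc j) (card H) \<le> card (sh H)"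
        if H: "finite H" "H \<subseteq> dsubsets (Suc j)" "card H < card G'" for H
      proof -
        have "card H < n" using G G' H by simp
        then show ?thesis using less.IH H(1,2) by blast
      qed
      have "phi (Suc j) (card G') \<le> card (sh G')"
        by (rule KK_stable_step[OF G'(1,2,5) IH0 IHj])
      with G' show "phi (Suc j) (card G) \<le> card (sh G)" by simp
    qed
  qed
  show ?case using main Suc.prems by blast
qed

definition shift1 :: "nat set set \<Rightarrow> nat set set" where
  "shift1 A = (\<lambda>u. Suc ` u) ` A"

lemma Suc_img_inj: "inj (\<lambda>u::nat set. Suc ` u)"
  by (rule injI) (simp add: inj_image_eq_iff)

lemma card_shift1: "card (shift1 A) = card A"
  unfolding shift1_def by (rule card_image) (rule inj_on_subset[OF Suc_img_inj], simp)

lemma shift1_mono: "A \<subseteq> B \<Longrightarrow> shift1 A \<subseteq> shift1 B"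
  unfolding shift1_def by auto

lemma sh_shift1: "sh (shift1 A) = shift1 (sh A)"
proof
  show "sh (shift1 A) \<subseteq> shift1 (sh A)"
  proof
    fix v assume "v \<in> sh (shift1 A)"
    then obtain u x where u: "u \<in> shift1 A" "x \<in> u" "v = u - {x}" unfolding sh_iff by blast
    then obtain a where a: "a \<in> A" "u = Suc ` a" unfolding shift1_def by blast
    then obtain y where y: "y \<in> a" "x = Suc y" using u by blast
    have "v = Suc ` (a - {y})" using u a y by auto
    moreover have "a - {y} \<in> sh A" using a y sh_I by blast
    ultimately show "v \<in> shift1 (sh A)" unfolding shift1_def by blast
  qed
next
  show "shift1 (sh A) \<subseteq> sh (shift1 A)"
  proof
    fix v assume "v \<in> shift1 (sh A)"
    then obtain w where w: "w \<in> sh A" "v = Suc ` w" unfolding shift1_def by blast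
    then obtain a y where a: "a \<in> A" "y \<in> a" "w = a - {y}" unfolding sh_iff by blast
    have "v = Suc ` a - {Suc y}" using w a by auto
    moreover have "Suc ` a \<in> shift1 A" using a unfolding shift1_def by blast
    moreover have "Suc y \<in> Suc ` a" using a by blast
    ultimately show "v \<in> sh (shift1 A)" using sh_I by metis
  qed
qed

lemma phi1: "phi (Suc 0) n = (if n = 0 then 0 else 1)"
  by (simp add: phi.simps(2))

lemma shift1_dsub: "A \<subseteq> dsubsets k \<Longrightarrow> shift1 A \<subseteq> dsubsets k"
proof
  fix v assume A: "A \<subseteq> dsubsets k" and "v \<in> shift1 A"
  then obtain a where a: "a \<in> A" "v = Suc ` a" unfolding shift1_def by blast
  have "finite a" "card a = k" using a A unfolding dsubsets_def by auto
  moreover have "card (Suc ` a) = card a" by (rule card_image) simp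
  moreover have "\<forall>y\<in>Suc ` a. 1 \<le> y" by auto
  ultimately show "v \<in> dsubsets k" using a unfolding dsubsets_def by simp
qed

lemma one_notin_shift1: "A \<subseteq> dsubsets k \<Longrightarrow> v \<in> shift1 A \<Longrightarrow> 1 \<notin> v"
  unfolding shift1_def dsubsets_def by force

lemma ins1_inj: "inj_on (insert (1::nat)) {v. 1 \<notin> v}"
  by (rule inj_onI) (metis insert_ident mem_Collect_eq)

lemma numQ: "phi (Suc j) (x + f) \<le> phi j f + max f (phi (Suc j) x)"
proof (cases j)
  case 0
  then show ?thesis by (simp add: phi1)
next
  case (Suc i)
  define A where "A = colex (Suc i) f"
  define Bx where "Bx = colex (Suc (Suc i)) x"
  define M where "M = max f (phi (Suc (Suc i)) x)"
  define G where "G = insert 1 ` shift1 A \<union> shift1 Bx"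
  have fA: "finite A" "card A = f" "A \<subseteq> dsubsets (Suc i)"
    unfolding A_def using colex_finite colex_card colex_dsub by auto
  have fB: "finite Bx" "card Bx = x" "Bx \<subseteq> dsubsets (Suc (Suc i))"
    unfolding Bx_def using colex_finite colex_card colex_dsub by auto
  have s1A: "shift1 A \<subseteq> {v. 1 \<notin> v}" using one_notin_shift1[OF fA(3)] by blast
  have c1: "card (insert 1 ` shift1 A) = f"
    using card_image[OF inj_on_subset[OF ins1_inj s1A]] card_shift1 fA by simp
  have c2: "card (shift1 Bx) = x" using card_shift1 fB by simp
  have disj: "insert 1 ` shift1 A \<inter> shift1 Bx = {}" using one_notin_shift1[OF fB(3)] by blast
  have finG: "finite G" unfolding G_def shift1_def using fA fB by simp
  have cG: "card G = x + f" unfolding G_def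
    using card_Un_disjoint[OF _ _ disj] c1 c2 fA fB unfolding shift1_def by simp
  have GD: "G \<subseteq> dsubsets (Suc (Suc i))"
  proof -
    have "insert 1 ` shift1 A \<subseteq> dsubsets (Suc (Suc i))"
    proof
      fix v assume "v \<in> insert 1 ` shift1 A"
      then obtain w where w: "w \<in> shift1 A" "v = insert 1 w" by blast
      have "w \<in> dsubsets (Suc i)" using w shift1_dsub fA by blast
      moreover have "1 \<notin> w" using w one_notin_shift1[OF fA(3)] by blast
      ultimately show "v \<in> dsubsets (Suc (Suc i))" using w unfolding dsubsets_def by auto
    qed
    moreover have "shift1 Bx \<subseteq> dsubsets (Suc (Suc i))" using shift1_dsub fB by blast
    ultimately show ?thesis unfolding G_def by blast
  qed
  have kk: "phi (Suc (Suc i)) (card G) \<le> card (sh G)" using KK finG GD by blast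
  have shA: "sh A \<subseteq> colex i (phi (Suc i) f)" unfolding A_def by (rule sh_colex)
  have shB: "sh Bx \<subseteq> colex (Suc i) M" unfolding Bx_def M_def
    using sh_colex colex_nest[of "phi (Suc (Suc i)) x" "max f (phi (Suc (Suc i)) x)" "Suc i"] by fastforce
  have AM: "A \<subseteq> colex (Suc i) M" unfolding A_def M_def by (rule colex_nest) simp
  have sub: "sh G \<subseteq> insert 1 ` shift1 (sh A) \<union> shift1 (colex (Suc i) M)"
  proof
    fix v assume "v \<in> sh G"
    then obtain u y where u: "u \<in> G" "y \<in> u" "v = u - {y}" unfolding sh_iff by blast
    show "v \<in> insert 1 ` shift1 (sh A) \<union> shift1 (colex (Suc i) M)"
    proof (cases "u \<in> shift1 Bx")
      case True
      hence "v \<in> sh (shift1 Bx)" using u sh_I by metis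
      hence "v \<in> shift1 (sh Bx)" using sh_shift1 by blast
      then show ?thesis using shift1_mono[OF shB] by blast
    next
      case False
      with u obtain w where w: "w \<in> shift1 A" "u = insert 1 w" unfolding G_def by blast
      have w1: "1 \<notin> w" using w one_notin_shift1[OF fA(3)] by blast
      show ?thesis
      proof (cases "y = 1")
        case True
        hence "v = w" using u w w1 by auto
        then show ?thesis using w shift1_mono[OF AM] by blast
      next
        case False
        hence "y \<in> w" using u w by auto
        have "v = insert 1 (w - {y})" using u w False by auto
        moreover have "w - {y} \<in> sh (shift1 A)" using w \<open>y \<in> w\<close> sh_I by metis
        ultimately show ?thesis using sh_shift1 by auto
      qed
    qed
  qed
  have finshA: "finite (sh A)" using finite_sh fA dsub_fin by blast
  have fin2: "finite (colex (Suc i) M)" by (rule colex_finite)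
  have "card (sh G) \<le> card (insert 1 ` shift1 (sh A) \<union> shift1 (colex (Suc i) M))"
    using sub finshA fin2 unfolding shift1_def by (intro card_mono) auto
  also have "\<dots> \<le> card (insert 1 ` shift1 (sh A)) + card (shift1 (colex (Suc i) M))"
    by (rule card_Un_le)
  also have "card (insert 1 ` shift1 (sh A)) \<le> card (shift1 (sh A))" by (rule card_image_le)
    (use finshA in \<open>simp add: shift1_def\<close>)
  also have "card (shift1 (sh A)) = card (sh A)" by (rule card_shift1)
  also have "card (sh A) \<le> phi (Suc i) f" unfolding A_def by (rule card_sh_colex)
  also have "card (shift1 (colex (Suc i) M)) = M" using card_shift1 colex_card by simp
  finally have "card (sh G) \<le> phi (Suc i) f + M" by simp
  with kk cG Suc show ?thesis unfolding M_def by simp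
qed

lemma numP: "f \<le> m \<Longrightarrow> Kf (Suc k) m \<le> Kf k f + max m (Kf (Suc k) (m - f))"
proof -
  assume fm: "f \<le> m"
  have "phi (Suc k) ((m - f) + f) \<le> phi k f + max f (phi (Suc k) (m - f))" by (rule numQ)
  hence "phi (Suc k) m \<le> phi k f + max f (phi (Suc k) (m - f))" using fm by simp
  moreover have "f + max m (m - f + phi (Suc k) (m - f)) = m + max f (phi (Suc k) (m - f))"
  proof (cases "f \<le> phi (Suc k) (m - f)")
    case True
    hence "max f (phi (Suc k) (m - f)) = phi (Suc k) (m - f)" by simp
    moreover have "max m (m - f + phi (Suc k) (m - f)) = m - f + phi (Suc k) (m - f)" using True fm by simp
    ultimately show ?thesis using fm by simp
  next
    case False
    hence "max f (phi (Suc k) (m - f)) = f" by simp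
    moreover have "max m (m - f + phi (Suc k) (m - f)) = m" using False fm by simp
    ultimately show ?thesis using fm by simp
  qed
  ultimately show ?thesis unfolding Kf_def by simp
qed

definition sg :: "nat \<Rightarrow> nat \<Rightarrow> nat" where
  "sg k j = (if j < k then j else Suc j)"

definition IncS :: "nat set set \<Rightarrow> nat set set" where
  "IncS F = F \<union> (\<Union>u\<in>F. range (\<lambda>k. sg k ` u))"

lemma sg_Inc1: "sg k \<in> Inc1"
  unfolding Inc1_def sg_def by auto

lemma Inc1_ge:
  assumes "pi \<in> Inc1" "1 \<le> j"
  shows "j \<le> pi j"
  using assms(2)
proof (induction j rule: dec_induct)
  case base then show ?case using assms(1) unfolding Inc1_def by auto
next
  case (step n)
  have "pi n < pi (Suc n)" using step.hyps assms(1) unfolding Inc1_def by auto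
  with step.IH show ?case by simp
qed

lemma Inc1_cases: "pi \<in> Inc1 \<Longrightarrow> 1 \<le> j \<Longrightarrow> pi j = j \<or> pi j = Suc j"
proof -
  assume a: "pi \<in> Inc1" "1 \<le> j"
  have "j \<le> pi j" using Inc1_ge a by blast
  moreover have "pi j \<le> j + 1" using a unfolding Inc1_def by auto
  ultimately show ?thesis by linarith
qed

lemma Inc1_prop:
  assumes "pi \<in> Inc1" "1 \<le> j" "pi j = Suc j" "j \<le> i"
  shows "pi i = Suc i"
  using assms(4)
proof (induction i rule: dec_induct)
  case base then show ?case using assms(3) by simp
next
  case (step n)
  have "1 \<le> n" using step.hyps assms(2) by simp
  hence "pi n < pi (Suc n)" "pi (Suc n) \<le> Suc n + 1" using assms(1) unfolding Inc1_def by auto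
  with step.IH show ?case by simp
qed

lemma Inc1_sg:
  assumes "pi \<in> Inc1" "\<forall>x\<in>u. 1 \<le> x"
  shows "pi ` u = u \<or> (\<exists>k. pi ` u = sg k ` u)"
proof (cases "\<exists>j. 1 \<le> j \<and> pi j = Suc j")
  case False
  have "pi x = x" if x: "x \<in> u" for x
  proof -
    have "1 \<le> x" using assms(2) x by blast
    from Inc1_cases[OF assms(1) this] False \<open>1 \<le> x\<close> show ?thesis by blast
  qed
  then have "pi ` u = u" by simp
  then show ?thesis by blast
next
  case True
  define k where "k = (LEAST j. 1 \<le> j \<and> pi j = Suc j)"
  have k: "1 \<le> k" "pi k = Suc k" unfolding k_def using LeastI_ex[OF True] by auto
  have "pi x = sg k x" if x: "x \<in> u" for x
  proof (cases "x < k")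
    case True
    have "x < (LEAST j. 1 \<le> j \<and> pi j = Suc j)" using True k_def by simp
    hence nx: "\<not> (1 \<le> x \<and> pi x = Suc x)" by (rule not_less_Least)
    have "1 \<le> x" using assms(2) x by blast
    from Inc1_cases[OF assms(1) this] nx \<open>1 \<le> x\<close> have "pi x = x" by blast
    then show ?thesis using True unfolding sg_def by simp
  next
    case False
    hence "pi x = Suc x" using Inc1_prop[OF assms(1) k] by simp
    then show ?thesis using False unfolding sg_def by simp
  qed
  then have "pi ` u = sg k ` u" by (rule image_cong[OF refl])
  then show ?thesis by blast
qed

lemma IncF_eq: "F \<subseteq> dsubsets d \<Longrightarrow> IncF F = IncS F"
proof
  assume F: "F \<subseteq> dsubsets d"
  show "IncF F \<subseteq> IncS F"
  proof
    fix v assume "v \<in> IncF F"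
    then obtain u pi where up: "v = pi ` u" "u \<in> F" "pi \<in> Inc1" unfolding IncF_def by blast
    have "\<forall>x\<in>u. 1 \<le> x" using up F unfolding dsubsets_def by auto
    then have "pi ` u = u \<or> (\<exists>k. pi ` u = sg k ` u)" using Inc1_sg up by blast
    then show "v \<in> IncS F" using up unfolding IncS_def by auto
  qed
next
  show "IncS F \<subseteq> IncF F"
  proof
    fix v assume "v \<in> IncS F"
    then consider "v \<in> F" | k u where "u \<in> F" "v = sg k ` u" unfolding IncS_def by blast
    then show "v \<in> IncF F"
    proof cases
      case 1
      have "id \<in> Inc1" unfolding Inc1_def by auto
      moreover have "v = id ` v" by simp
      ultimately show ?thesis using 1 unfolding IncF_def by blast
    next
      case 2
      then show ?thesis using sg_Inc1 unfolding IncF_def by blast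
    qed
  qed
qed

lemma sg_id: "\<forall>x\<in>u. x < k \<Longrightarrow> sg k ` u = u"
  unfolding sg_def by auto

lemma range_sg_sub:
  assumes "finite u"
  shows "range (\<lambda>k. sg k ` u) \<subseteq> insert u ((\<lambda>k. sg k ` u) ` {..Suc (\<Sum>u)})"
proof
  fix v assume "v \<in> range (\<lambda>k. sg k ` u)"
  then obtain k where k: "v = sg k ` u" by blast
  show "v \<in> insert u ((\<lambda>k. sg k ` u) ` {..Suc (\<Sum>u)})"
  proof (cases "k \<le> Suc (\<Sum>u)")
    case True
    hence "k \<in> {..Suc (\<Sum>u)}" by simp
    then show ?thesis using k by (intro insertI2 image_eqI)
  next
    case False
    have "\<forall>x\<in>u. x < k"
    proof
      fix x assume "x \<in> u"
      have "\<Sum>{x} \<le> \<Sum>u" by (rule sum_mono2) (use assms \<open>x \<in> u\<close> in auto)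
      with False show "x < k" by simp
    qed
    hence "v = u" using k sg_id by simp
    then show ?thesis by simp
  qed
qed

lemma IncS_finite:
  assumes "finite F" "\<forall>u\<in>F. finite u"
  shows "finite (IncS F)"
  unfolding IncS_def
proof (rule finite_UnI[OF assms(1)], rule finite_UN_I[OF assms(1)])
  fix u assume "u \<in> F"
  hence "finite u" using assms(2) by blast
  show "finite (range (\<lambda>k. sg k ` u))"
    by (rule finite_subset[OF range_sg_sub[OF \<open>finite u\<close>]]) simp
qed

lemma IncS_mono: "F \<subseteq> H \<Longrightarrow> IncS F \<subseteq> IncS H"
  unfolding IncS_def by blast

lemma IncS_sub: "F \<subseteq> IncS F"
  unfolding IncS_def by blast

lemma dsub_elems: "F \<subseteq> dsubsets d \<Longrightarrow> u \<in> F \<Longrightarrow> finite u \<and> card u = d \<and> (\<forall>x\<in>u. 1 \<le> x)"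
  unfolding dsubsets_def by auto

lemma IncS_fin': "finite F \<Longrightarrow> F \<subseteq> dsubsets d \<Longrightarrow> finite (IncS F)"
  using IncS_finite dsub_fin by blast

lemma sg_ge: "x \<le> sg k x"
  unfolding sg_def by auto

lemma sg0: "sg 0 x = Suc x"
  unfolding sg_def by simp

lemma sg_Suc: "sg (Suc j) (Suc x) = Suc (sg j x)"
  unfolding sg_def by simp

lemma IncS_ge2:
  assumes "\<forall>u\<in>F. \<forall>x\<in>u. 2 \<le> x" "v \<in> IncS F"
  shows "1 \<notin> v"
proof -
  from assms(2) consider "v \<in> F" | j u where "u \<in> F" "v = sg j ` u" unfolding IncS_def by blast
  then show ?thesis
  proof cases
    case 1 then show ?thesis using assms(1) by fastforce
  next
    case 2
    show ?thesis
    proof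
      assume "1 \<in> v"
      then obtain x where x: "x \<in> u" "1 = sg j x" using 2 by blast
      hence "2 \<le> x" using assms(1) 2 by blast
      with x show False using sg_ge[of x j] by linarith
    qed
  qed
qed

lemma IncS_I: "u \<in> F \<Longrightarrow> sg j ` u \<in> IncS F"
  unfolding IncS_def by blast

lemma mu_pos: "finite F \<Longrightarrow> u \<in> F \<Longrightarrow> 1 \<in> u \<Longrightarrow> finite u \<Longrightarrow> 0 < mu F"
proof -
  assume a: "finite F" "u \<in> F" "1 \<in> u" "finite u"
  have "\<Sum>{1::nat} \<le> \<Sum>u" by (rule sum_mono2) (use a in auto)
  hence "1 \<le> \<Sum>u" by simp
  moreover have "(\<Sum>w\<in>{u}. \<Sum>w) \<le> mu F" unfolding mu_def by (rule sum_mono2) (use a in auto)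
  hence "\<Sum>u \<le> mu F" by simp
  ultimately show ?thesis by simp
qed

theorem IncMain: "finite F \<Longrightarrow> F \<subseteq> dsubsets d \<Longrightarrow> Kf d (card F) \<le> card (IncS F)"
proof (induction d arbitrary: F)
  case 0
  have "card F \<le> card (IncS F)" by (rule card_mono[OF IncS_fin'[OF 0] IncS_sub])
  then show ?case by (simp add: Kf_def)
next
  case (Suc k)
  have IHk: "Kf k (card H) \<le> card (IncS H)" if "finite H" "H \<subseteq> dsubsets k" for H
    using Suc.IH that by blast
  show ?case using Suc.prems
  proof (induction F rule: measure_induct_rule[of mu])
    case (less F)
    have finF: "finite F" and FD: "F \<subseteq> dsubsets (Suc k)" using less.prems by auto
    have el: "finite u" "card u = Suc k" "\<forall>x\<in>u. 1 \<le> x" if "u \<in> F" for u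
      using dsub_elems[OF FD that] by auto
    have finI: "finite (IncS F)" by (rule IncS_fin'[OF finF FD])
    show ?case
    proof (cases "F = {}")
      case True then show ?thesis by (simp add: Kf_def)
    next
      case Fne: False
      show ?thesis
      proof (cases "\<exists>u\<in>F. 1 \<in> u")
        case True
        then obtain u0 where u0: "u0 \<in> F" "1 \<in> u0" by blast
        define F1 where "F1 = {u\<in>F. 1 \<in> u}"
        define F0 where "F0 = {u\<in>F. 1 \<notin> u}"
        define W where "W = (\<lambda>u. u - {1}) ` F1"
        have splitF: "F = F1 \<union> F0" "F1 \<inter> F0 = {}" unfolding F1_def F0_def by auto
        have fin01: "finite F1" "finite F0" using finF unfolding F1_def F0_def by auto
        have cF: "card F = card F1 + card F0" using splitF fin01 by (metis card_Un_disjoint)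
        have inj: "inj_on (\<lambda>u. u - {1}) F1"
        proof (rule inj_onI)
          fix x y assume "x \<in> F1" "y \<in> F1" "x - {1} = y - {1}"
          moreover have "1 \<in> x" "1 \<in> y" using calculation unfolding F1_def by auto
          ultimately show "x = y" by (metis insert_Diff)
        qed
        have cW: "card W = card F1" unfolding W_def using card_image[OF inj] .
        have finW: "finite W" unfolding W_def using fin01 by simp
        have WD: "W \<subseteq> dsubsets k"
        proof
          fix w assume "w \<in> W"
          then obtain u where u: "u \<in> F1" "w = u - {1}" unfolding W_def by blast
          hence "u \<in> F" "1 \<in> u" unfolding F1_def by auto
          with el[OF \<open>u \<in> F\<close>] u show "w \<in> dsubsets k" unfolding dsubsets_def by auto
        qed
        have W2: "\<forall>w\<in>W. \<forall>x\<in>w. 2 \<le> x"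
        proof (intro ballI)
          fix w x assume "w \<in> W" "x \<in> w"
          then obtain u where u: "u \<in> F1" "w = u - {1}" unfolding W_def by blast
          hence "u \<in> F" unfolding F1_def by auto
          hence "1 \<le> x" using el(3)[OF \<open>u \<in> F\<close>] u \<open>x \<in> w\<close> by blast
          moreover have "x \<noteq> 1" using u \<open>x \<in> w\<close> by blast
          ultimately show "2 \<le> x" by linarith
        qed
        have F02: "\<forall>u\<in>F0. \<forall>x\<in>u. 2 \<le> x"
        proof (intro ballI)
          fix u x assume "u \<in> F0" "x \<in> u"
          hence "u \<in> F" "1 \<notin> u" unfolding F0_def by auto
          hence "1 \<le> x" using el(3)[OF \<open>u \<in> F\<close>] \<open>x \<in> u\<close> by blast
          moreover have "x \<noteq> 1" using \<open>1 \<notin> u\<close> \<open>x \<in> u\<close> by blast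
          ultimately show "2 \<le> x" by linarith
        qed
        have F0D: "F0 \<subseteq> dsubsets (Suc k)" using FD unfolding F0_def by auto
        have muF: "mu F = mu F1 + mu F0" unfolding mu_def using splitF fin01
          by (metis sum.union_disjoint)
        have "u0 \<in> F1" using u0 unfolding F1_def by simp
        hence "0 < mu F1" using mu_pos[OF fin01(1) \<open>u0 \<in> F1\<close> u0(2) el(1)[OF u0(1)]] by simp
        hence muless: "mu F0 < mu F" using muF by simp
        have IH0: "Kf (Suc k) (card F0) \<le> card (IncS F0)" using less.IH[OF muless] fin01(2) F0D by blast
        have IHW: "Kf k (card W) \<le> card (IncS W)" using IHk[OF finW WD] .
        have S1: "shift1 F \<subseteq> IncS F"
        proof
          fix v assume "v \<in> shift1 F"
          then obtain u where u: "u \<in> F" "v = Suc ` u" unfolding shift1_def by blast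
          have "v = sg 0 ` u" using u sg0 by simp
          then show "v \<in> IncS F" using IncS_I[OF u(1)] by simp
        qed
        have S2: "IncS F0 \<subseteq> IncS F" using IncS_mono splitF by blast
        have S3: "insert 1 ` IncS W \<subseteq> IncS F"
        proof
          fix v assume "v \<in> insert 1 ` IncS W"
          then obtain v' where v': "v' \<in> IncS W" "v = insert 1 v'" by blast
          from v'(1) consider "v' \<in> W" | j w where "w \<in> W" "v' = sg j ` w" unfolding IncS_def by blast
          then show "v \<in> IncS F"
          proof cases
            case 1
            then obtain u where u: "u \<in> F1" "v' = u - {1}" unfolding W_def by blast
            hence "v = u" using v' unfolding F1_def by auto
            then show ?thesis using u IncS_sub unfolding F1_def by blast
          next
            case 2
            then obtain u where u: "u \<in> F1" "w = u - {1}" unfolding W_def by blast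
            have u1: "1 \<in> u" "u \<in> F" using u unfolding F1_def by auto
            have w2: "\<forall>x\<in>w. 2 \<le> x" using W2 \<open>w \<in> W\<close> by blast
            have "sg (max j 2) ` u = insert 1 (sg j ` w)"
            proof -
              have "u = insert 1 w" using u u1 by auto
              moreover have "sg (max j 2) 1 = 1" unfolding sg_def by simp
              moreover have "sg (max j 2) x = sg j x" if "x \<in> w" for x
                using w2 that unfolding sg_def by (auto simp: max_def)
              ultimately show ?thesis by auto
            qed
            moreover have "sg (max j 2) ` u \<in> IncS F" by (rule IncS_I[OF u1(2)])
            ultimately show ?thesis using v' 2 by simp
          qed
        qed
        have n1a: "1 \<notin> v" if "v \<in> shift1 F \<union> IncS F0" for v
          using that one_notin_shift1[OF FD] IncS_ge2[OF F02] by blast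
        have WI1: "IncS W \<subseteq> {v. 1 \<notin> v}" using IncS_ge2[OF W2] by blast
        have finW': "finite (IncS W)" by (rule IncS_fin'[OF finW WD])
        have fin0': "finite (IncS F0)" by (rule IncS_fin'[OF fin01(2) F0D])
        have finS1: "finite (shift1 F)" unfolding shift1_def using finF by simp
        have disj: "insert 1 ` IncS W \<inter> (shift1 F \<union> IncS F0) = {}" using n1a by blast
        have c3: "card (insert 1 ` IncS W) = card (IncS W)"
          by (rule card_image[OF inj_on_subset[OF ins1_inj WI1]])
        have "card (insert 1 ` IncS W) + card (shift1 F \<union> IncS F0) = card (insert 1 ` IncS W \<union> (shift1 F \<union> IncS F0))"
          using disj finW' fin0' finS1 by (intro card_Un_disjoint[symmetric]) auto
        also have "\<dots> \<le> card (IncS F)" using S1 S2 S3 finI by (intro card_mono) auto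
        finally have tot: "card (IncS W) + card (shift1 F \<union> IncS F0) \<le> card (IncS F)" using c3 by simp
        have m1: "card F \<le> card (shift1 F \<union> IncS F0)"
          using card_shift1[of F] card_mono[of "shift1 F \<union> IncS F0" "shift1 F"] finS1 fin0' by simp
        have m2: "card (IncS F0) \<le> card (shift1 F \<union> IncS F0)"
          using card_mono[of "shift1 F \<union> IncS F0" "IncS F0"] finS1 fin0' by simp
        have fm: "card W \<le> card F" using cF cW by simp
        have "Kf (Suc k) (card F) \<le> Kf k (card W) + max (card F) (Kf (Suc k) (card F - card W))"
          by (rule numP[OF fm])
        also have "card F - card W = card F0" using cF cW by simp
        also have "Kf k (card W) + max (card F) (Kf (Suc k) (card F0)) \<le> card (IncS W) + max (card F) (card (IncS F0))"
          using IHW IH0 by (intro add_mono max.mono) simp_all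
        also have "\<dots> \<le> card (IncS W) + card (shift1 F \<union> IncS F0)" using m1 m2 by simp
        also have "\<dots> \<le> card (IncS F)" by (rule tot)
        finally show ?thesis .
      next
        case False
        hence no1: "1 \<notin> u" if "u \<in> F" for u using that by blast
        define pr where "pr = (\<lambda>u::nat set. (\<lambda>x. x - 1) ` u)"
        have el2: "\<forall>x\<in>u. 2 \<le> x" if "u \<in> F" for u
        proof
          fix x assume "x \<in> u"
          hence "1 \<le> x" "x \<noteq> 1" using el(3)[OF that] no1[OF that] by auto
          then show "2 \<le> x" by linarith
        qed
        have Spr: "Suc ` pr u = u" if "u \<in> F" for u
        proof -
          have "Suc ` pr u = (\<lambda>x. Suc (x - 1)) ` u" unfolding pr_def by (simp add: image_image)
          also have "\<dots> = (\<lambda>x. x) ` u"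
            by (rule image_cong[OF refl]) (use el2[OF that] in fastforce)
          finally show ?thesis by simp
        qed
        have injpr: "inj_on pr F"
        proof (rule inj_onI)
          fix u v assume uv: "u \<in> F" "v \<in> F" "pr u = pr v"
          have "u = Suc ` pr u" using Spr[OF uv(1)] by simp
          also have "\<dots> = Suc ` pr v" using uv(3) by simp
          also have "\<dots> = v" using Spr[OF uv(2)] by simp
          finally show "u = v" .
        qed
        define F' where "F' = pr ` F"
        have cF': "card F' = card F" unfolding F'_def using card_image[OF injpr] .
        have finF': "finite F'" unfolding F'_def using finF by simp
        have injm: "inj_on (\<lambda>x::nat. x - 1) u" if "u \<in> F" for u
        proof (rule inj_onI)
          fix x y assume "x \<in> u" "y \<in> u" "x - 1 = y - 1"
          moreover have "1 \<le> x" "1 \<le> y" using el(3)[OF that] calculation by auto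
          ultimately show "x = y" by linarith
        qed
        have F'D: "F' \<subseteq> dsubsets (Suc k)"
        proof
          fix w assume "w \<in> F'"
          then obtain u where u: "u \<in> F" "w = pr u" unfolding F'_def by blast
          have "card w = card u" unfolding u(2) pr_def by (rule card_image[OF injm[OF u(1)]])
          moreover have "finite w" using el(1)[OF u(1)] u unfolding pr_def by simp
          moreover have "\<forall>x\<in>w. 1 \<le> x"
          proof
            fix x assume "x \<in> w"
            then obtain y where "y \<in> u" "x = y - 1" using u unfolding pr_def by blast
            with el2[OF u(1)] show "1 \<le> x" by fastforce
          qed
          ultimately show "w \<in> dsubsets (Suc k)" using el(2)[OF u(1)] unfolding dsubsets_def by simp
        qed
        have sumpr: "\<Sum>(pr u) < \<Sum>u" if "u \<in> F" for u
        proof -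
          have "\<Sum>(pr u) = (\<Sum>x\<in>u. x - 1)" unfolding pr_def
            using sum.reindex[OF injm[OF that], of "\<lambda>x. x"] by simp
          also have "\<dots> < (\<Sum>x\<in>u. x)"
          proof (rule sum_strict_mono)
            show "finite u" using el(1)[OF that] .
            show "u \<noteq> {}" using el(2)[OF that] by auto
            fix x assume "x \<in> u"
            then show "x - 1 < x" using el(3)[OF that] by fastforce
          qed
          finally show ?thesis by simp
        qed
        have "mu F' = (\<Sum>u\<in>F. \<Sum>(pr u))" unfolding mu_def F'_def
          using sum.reindex[OF injpr, of "\<lambda>w. \<Sum>w"] by simp
        also have "\<dots> < (\<Sum>u\<in>F. \<Sum>u)"
          by (rule sum_strict_mono[OF finF Fne]) (rule sumpr)
        finally have muless: "mu F' < mu F" unfolding mu_def .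
        have IH': "Kf (Suc k) (card F') \<le> card (IncS F')" using less.IH[OF muless] finF' F'D by blast
        have sub: "shift1 (IncS F') \<subseteq> IncS F"
        proof
          fix v assume "v \<in> shift1 (IncS F')"
          then obtain v' where v': "v' \<in> IncS F'" "v = Suc ` v'" unfolding shift1_def by blast
          from v'(1) consider "v' \<in> F'" | j w where "w \<in> F'" "v' = sg j ` w" unfolding IncS_def by blast
          then show "v \<in> IncS F"
          proof cases
            case 1
            then obtain u where u: "u \<in> F" "v' = pr u" unfolding F'_def by blast
            hence "v = u" using v' Spr by simp
            then show ?thesis using u IncS_sub by blast
          next
            case 2
            then obtain u where u: "u \<in> F" "w = pr u" unfolding F'_def by blast
            have "v = Suc ` sg j ` pr u" using v' 2 u by simp
            also have "\<dots> = sg (Suc j) ` Suc ` pr u" by (simp add: image_image sg_Suc)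
            also have "\<dots> = sg (Suc j) ` u" using Spr[OF u(1)] by simp
            finally show ?thesis using IncS_I[OF u(1)] by simp
          qed
        qed
        have "card (IncS F') = card (shift1 (IncS F'))" by (rule card_shift1[symmetric])
        also have "\<dots> \<le> card (IncS F)" by (rule card_mono[OF finI sub])
        finally show ?thesis using IH' cF' by simp
      qed
    qed
  qed
qed

lemma dbinrep_ge:
  assumes "dbinrep e m s a" "s \<le> i" "i \<le> e"
  shows "i \<le> a i"
  using assms(2,3)
proof (induction i rule: dec_induct)
  case base then show ?case using assms(1) unfolding dbinrep_def by simp
next
  case (step n)
  have "a n < a (Suc n)" using assms(1) step.hyps step.prems unfolding dbinrep_def by simp
  with step.IH step.prems show ?case by simp
qed

lemma dbinrep_prev:
  assumes "dbinrep (Suc e) m s a" "s \<le> e"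
  shows "dbinrep e (m - (a (Suc e) choose Suc e)) s a"
    and "m = (a (Suc e) choose Suc e) + (m - (a (Suc e) choose Suc e))"
proof -
  have m: "m = (\<Sum>i=s..Suc e. a i choose i)" using assms unfolding dbinrep_def by simp
  also have "\<dots> = (\<Sum>i=s..e. a i choose i) + (a (Suc e) choose Suc e)"
    using assms(2) by simp
  finally have m2: "m = (\<Sum>i=s..e. a i choose i) + (a (Suc e) choose Suc e)" .
  then show "m = (a (Suc e) choose Suc e) + (m - (a (Suc e) choose Suc e))" by simp
  show "dbinrep e (m - (a (Suc e) choose Suc e)) s a"
    using assms m2 unfolding dbinrep_def by auto
qed

lemma dbinrep_bound: "dbinrep e m s a \<Longrightarrow> m < (Suc (a e) choose e)"
proof (induction e arbitrary: m)
  case 0 then show ?case unfolding dbinrep_def by auto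
next
  case (Suc e)
  have ae: "Suc e \<le> a (Suc e)" using dbinrep_ge[OF Suc.prems, of "Suc e"] Suc.prems
    unfolding dbinrep_def by simp
  show ?case
  proof (cases "s = Suc e")
    case True
    hence "m = a (Suc e) choose Suc e" using Suc.prems unfolding dbinrep_def by simp
    moreover have "0 < a (Suc e) choose e" using ae by simp
    ultimately show ?thesis by (simp add: binomial_Suc_Suc)
  next
    case False
    hence se: "s \<le> e" using Suc.prems unfolding dbinrep_def by simp
    note p = dbinrep_prev[OF Suc.prems se]
    have "m - (a (Suc e) choose Suc e) < Suc (a e) choose e" by (rule Suc.IH[OF p(1)])
    moreover have "a e < a (Suc e)" using Suc.prems se unfolding dbinrep_def by simp
    hence "Suc (a e) choose e \<le> a (Suc e) choose e" by (intro choose_mono_n) simp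
    ultimately show ?thesis using p(2) by (simp add: binomial_Suc_Suc)
  qed
qed

lemma Kf_rec:
  assumes "Suc k \<le> a" "r < (a choose k)"
  shows "Kf (Suc k) ((a choose Suc k) + r) = (Suc a choose Suc k) + Kf k r"
  using phi_rec[OF assms] unfolding Kf_def by (simp add: binomial_Suc_Suc)

lemma dbinrep_Kf: "dbinrep e m s a \<Longrightarrow> (\<Sum>i=s..e. (a i + 1) choose i) = Kf e m"
proof (induction e arbitrary: m)
  case 0 then show ?case unfolding dbinrep_def by auto
next
  case (Suc e)
  have ae: "Suc e \<le> a (Suc e)" using dbinrep_ge[OF Suc.prems, of "Suc e"] Suc.prems
    unfolding dbinrep_def by simp
  show ?case
  proof (cases "s = Suc e")
    case True
    hence m: "m = (a (Suc e) choose Suc e) + 0" using Suc.prems unfolding dbinrep_def by simp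
    have "Kf (Suc e) m = (Suc (a (Suc e)) choose Suc e) + Kf e 0"
      unfolding m by (rule Kf_rec[OF ae]) (use ae in simp)
    then show ?thesis using True by (simp add: Kf_def)
  next
    case False
    hence se: "s \<le> e" using Suc.prems unfolding dbinrep_def by simp
    note p = dbinrep_prev[OF Suc.prems se]
    define r where "r = m - (a (Suc e) choose Suc e)"
    have rb: "r < (Suc (a e) choose e)" unfolding r_def by (rule dbinrep_bound[OF p(1)])
    have "a e < a (Suc e)" using Suc.prems se unfolding dbinrep_def by simp
    hence "Suc (a e) choose e \<le> a (Suc e) choose e" by (intro choose_mono_n) simp
    with rb have rb2: "r < a (Suc e) choose e" by simp
    have "Kf (Suc e) m = Kf (Suc e) ((a (Suc e) choose Suc e) + r)" using p(2) r_def by simp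
    also have "\<dots> = (Suc (a (Suc e)) choose Suc e) + Kf e r" by (rule Kf_rec[OF ae rb2])
    also have "Kf e r = (\<Sum>i=s..e. (a i + 1) choose i)" using Suc.IH[OF p(1)] r_def by simp
    finally have "Kf (Suc e) m = (Suc (a (Suc e)) choose Suc e) + (\<Sum>i=s..e. (a i + 1) choose i)" .
    moreover have "(\<Sum>i=s..Suc e. (a i + 1) choose i) = (\<Sum>i=s..e. (a i + 1) choose i) + ((a (Suc e) + 1) choose Suc e)"
      using se by simp
    ultimately show ?thesis by simp
  qed
qed

lemma dbinrep_ex: "m \<noteq> 0 \<Longrightarrow> \<exists>s a. dbinrep (Suc d) m s a"
proof (induction d arbitrary: m)
  case 0
  have "dbinrep (Suc 0) m (Suc 0) (\<lambda>_. m)" unfolding dbinrep_def using 0 by simp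
  then show ?case by blast
next
  case (Suc d)
  obtain a0 r where ar: "Suc (Suc d) \<le> a0" "r < (a0 choose Suc d)" "m = (a0 choose Suc (Suc d)) + r"
    using phi_unfold[OF Suc.prems] by blast
  show ?case
  proof (cases "r = 0")
    case True
    have "dbinrep (Suc (Suc d)) m (Suc (Suc d)) (\<lambda>_. a0)" unfolding dbinrep_def using ar True by simp
    then show ?thesis by blast
  next
    case False
    obtain s b where sb: "dbinrep (Suc d) r s b" using Suc.IH[OF False] by blast
    have sd: "1 \<le> s" "s \<le> Suc d" using sb unfolding dbinrep_def by auto
    have "(b (Suc d) choose Suc d) \<le> r"
    proof -
      have "(\<Sum>i\<in>{Suc d}. b i choose i) \<le> (\<Sum>i=s..Suc d. b i choose i)"
        by (rule sum_mono2) (use sd in auto)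
      then show ?thesis using sb unfolding dbinrep_def by simp
    qed
    hence "b (Suc d) < a0"
      using ar(2) choose_mono_n[of a0 "b (Suc d)" "Suc d"] by (cases "b (Suc d) < a0") auto
    define a where "a = b(Suc (Suc d) := a0)"
    have "dbinrep (Suc (Suc d)) m s a"
      unfolding dbinrep_def
    proof (intro conjI allI impI)
      show "1 \<le> s" "s \<le> Suc (Suc d)" using sd by auto
      show "s \<le> a s" using sb sd unfolding dbinrep_def a_def by simp
    next
      fix i assume i: "s \<le> i \<and> i < Suc (Suc d)"
      show "a i < a (Suc i)"
      proof (cases "i = Suc d")
        case True then show ?thesis using \<open>b (Suc d) < a0\<close> unfolding a_def by simp
      next
        case False
        hence "i < Suc d" using i by simp
        then show ?thesis using sb i unfolding dbinrep_def a_def by simp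
      qed
    next
      have "(\<Sum>i=s..Suc (Suc d). a i choose i) = (\<Sum>i=s..Suc d. a i choose i) + (a0 choose Suc (Suc d))"
        using sd unfolding a_def by simp
      also have "(\<Sum>i=s..Suc d. a i choose i) = (\<Sum>i=s..Suc d. b i choose i)"
        unfolding a_def by (rule sum.cong) auto
      also have "\<dots> = r" using sb unfolding dbinrep_def by simp
      finally show "m = (\<Sum>i=s..Suc (Suc d). a i choose i)" using ar by simp
    qed
    then show ?thesis by blast
  qed
qed

lemma IncD_Kf: "1 \<le> d \<Longrightarrow> IncD d m = Kf d m"
proof -
  assume d: "1 \<le> d"
  then obtain d0 where d0: "d = Suc d0" by (cases d) auto
  show ?thesis
  proof (cases "m = 0")
    case True then show ?thesis unfolding IncD_def Kf_def by simp
  next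
    case False
    obtain s0 a0 where "dbinrep d m s0 a0" using dbinrep_ex[OF False] d0 by blast
    hence "\<exists>p. case p of (s, a) \<Rightarrow> dbinrep d m s a" by (intro exI[of _ "(s0, a0)"]) simp
    hence sp: "case (SOME p. case p of (s, a) \<Rightarrow> dbinrep d m s a) of (s, a) \<Rightarrow> dbinrep d m s a"
      by (rule someI_ex)
    obtain s a where sa: "(SOME p. case p of (s, a) \<Rightarrow> dbinrep d m s a) = (s, a)"
      by (cases "SOME p. case p of (s, a) \<Rightarrow> dbinrep d m s a") auto
    have rep: "dbinrep d m s a" using sp sa by simp
    have "IncD d m = (\<Sum>i=s..d. (a i + 1) choose i)" unfolding IncD_def using False sa by simp
    also have "\<dots> = Kf d m" by (rule dbinrep_Kf[OF rep])
    finally show ?thesis .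
  qed
qed

theorem corollary3p13:
  fixes d :: nat and F :: "nat set set"
  assumes "d \<ge> 1" and "finite F" and "F \<subseteq> dsubsets d"
  shows "card (IncF F) \<ge> IncD d (card F)"
proof -
  have "IncD d (card F) = Kf d (card F)" using IncD_Kf assms(1) by blast
  also have "\<dots> \<le> card (IncS F)" by (rule IncMain[OF assms(2,3)])
  also have "IncS F = IncF F" using IncF_eq[OF assms(3)] by simp
  finally show ?thesis .
qed

end
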